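(* Let $m\ge2$ and $G=CK(2m-1)$. Every set of edges $B\subset E(G)$ of Class B is a blocker for the simple Hamiltonian paths of $G$.
   Context: $CK(2m-1)$ is the complete convex geometric graph on $2m-1$ points in convex position, labelled clockwise $0,\dots,2m-2$ (elements of $\mathbb{Z}_{2m-1}$; indices mod $2m-1$), with all segments as edges. A simple Hamiltonian path (SHP) is a path through all vertices whose edges pairwise do not cross; a blocker for SHPs is an edge set of smallest possible size (which is $m$) sharing an edge with every SHP. Class B (up to cyclic rotation $x\mapsto x+k$ of labels): sets consisting of the following edges, for integers $\alpha,\delta\ge0$, $\beta,\gamma\ge2$ with $\alpha+\delta\le m-5$ and $\beta+\gamma=m-\alpha-\delta-1$: (1)–(2) all edges of the boundary paths $\langle\alpha,\dots,\alpha+\beta\rangle$ and $\langle\alpha+\beta+1,\dots,m-\delta\rangle$; (3) the edge $[\alpha+\beta-\eta,\,\alpha+\beta+1+\eta]$ for some integer $1\le\eta\le\min(\beta-1,\gamma-1)$; (4) the edges $[i-1-\epsilon_i,\,i+\epsilon_i]$, $1\le i\le\alpha$, with $\alpha+\beta-1>\epsilon_1>\dots>\epsilon_\alpha>0$; (5) the edges $[m-j-\xi_j,\,m-j+1+\xi_j]$, $1\le j\le\delta$, with $\gamma+\delta-1>\xi_1>\dots>\xi_\delta>0$. *)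

theory Defs
  imports Main
begin

text \<open>The complete convex geometric graph CK(n): vertices 0..n-1 in convex position,
  labelled clockwise; vertex labels are elements of Z_n, represented by 0..n-1.
  An edge (segment) is a two-element set of vertices.\<close>

definition vx :: "nat \<Rightarrow> int \<Rightarrow> nat" where
  "vx n x = nat (x mod int n)"

definition CK_edges :: "nat \<Rightarrow> nat set set" where
  "CK_edges n = {{a, b} | a b. a < n \<and> b < n \<and> a \<noteq> b}"

definition cyc_between :: "nat \<Rightarrow> nat \<Rightarrow> nat \<Rightarrow> nat \<Rightarrow> bool" where
  "cyc_between n a x b \<longleftrightarrow>
     0 < (int x - int a) mod int n \<and> (int x - int a) mod int n < (int b - int a) mod int n"

text \<open>Two segments between points in convex position cross iff they have four
  distinct endpoints which interleave along the circle.\<close>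
definition crosses :: "nat \<Rightarrow> nat set \<Rightarrow> nat set \<Rightarrow> bool" where
  "crosses n e f \<longleftrightarrow> (\<exists>a b c d. e = {a, b} \<and> f = {c, d} \<and>
      distinct [a, b, c, d] \<and> cyc_between n a c b \<noteq> cyc_between n a d b)"

definition path_edges :: "nat list \<Rightarrow> nat set set" where
  "path_edges p = {{p ! i, p ! Suc i} | i. Suc i < length p}"

definition SHP :: "nat \<Rightarrow> nat list \<Rightarrow> bool" where
  "SHP n p \<longleftrightarrow> distinct p \<and> set p = {0..<n} \<and>
     (\<forall>e\<in>path_edges p. \<forall>f\<in>path_edges p. \<not> crosses n e f)"

definition meets_all_SHP :: "nat \<Rightarrow> nat set set \<Rightarrow> bool" where
  "meets_all_SHP n B \<longleftrightarrow> (\<forall>p. SHP n p \<longrightarrow> B \<inter> path_edges p \<noteq> {})"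

definition SHP_blocker :: "nat \<Rightarrow> nat set set \<Rightarrow> bool" where
  "SHP_blocker n B \<longleftrightarrow> B \<subseteq> CK_edges n \<and> meets_all_SHP n B \<and>
     (\<forall>B'. B' \<subseteq> CK_edges n \<and> meets_all_SHP n B' \<longrightarrow> card B \<le> card B')"

definition seg :: "nat \<Rightarrow> int \<Rightarrow> int \<Rightarrow> int \<Rightarrow> nat set" where
  "seg n k x y = {vx n (x + k), vx n (y + k)}"

definition classB_set ::
  "nat \<Rightarrow> int \<Rightarrow> int \<Rightarrow> int \<Rightarrow> int \<Rightarrow> int \<Rightarrow> int \<Rightarrow> (int \<Rightarrow> int) \<Rightarrow> (int \<Rightarrow> int) \<Rightarrow> nat set set" where
  "classB_set m k \<alpha> \<beta> \<gamma> \<delta> \<eta> \<epsilon> \<xi> =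
     (let n = 2 * m - 1; mi = int m in
       {seg n k i (i + 1) | i. \<alpha> \<le> i \<and> i < \<alpha> + \<beta>}
     \<union> {seg n k i (i + 1) | i. \<alpha> + \<beta> + 1 \<le> i \<and> i < mi - \<delta>}
     \<union> {seg n k (\<alpha> + \<beta> - \<eta>) (\<alpha> + \<beta> + 1 + \<eta>)}
     \<union> {seg n k (i - 1 - \<epsilon> i) (i + \<epsilon> i) | i. 1 \<le> i \<and> i \<le> \<alpha>}
     \<union> {seg n k (mi - j - \<xi> j) (mi - j + 1 + \<xi> j) | j. 1 \<le> j \<and> j \<le> \<delta>})"

definition classB_params ::
  "nat \<Rightarrow> int \<Rightarrow> int \<Rightarrow> int \<Rightarrow> int \<Rightarrow> int \<Rightarrow> (int \<Rightarrow> int) \<Rightarrow> (int \<Rightarrow> int) \<Rightarrow> bool" where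
  "classB_params m \<alpha> \<beta> \<gamma> \<delta> \<eta> \<epsilon> \<xi> \<longleftrightarrow>
     0 \<le> \<alpha> \<and> 0 \<le> \<delta> \<and> 2 \<le> \<beta> \<and> 2 \<le> \<gamma> \<and>
     \<alpha> + \<delta> \<le> int m - 5 \<and> \<beta> + \<gamma> = int m - \<alpha> - \<delta> - 1 \<and>
     1 \<le> \<eta> \<and> \<eta> \<le> min (\<beta> - 1) (\<gamma> - 1) \<and>
     (\<forall>i. 1 \<le> i \<and> i \<le> \<alpha> \<longrightarrow> 0 < \<epsilon> i \<and> \<epsilon> i < \<alpha> + \<beta> - 1) \<and>
     (\<forall>i. 1 \<le> i \<and> i < \<alpha> \<longrightarrow> \<epsilon> (i + 1) < \<epsilon> i) \<and>
     (\<forall>j. 1 \<le> j \<and> j \<le> \<delta> \<longrightarrow> 0 < \<xi> j \<and> \<xi> j < \<gamma> + \<delta> - 1) \<and>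
     (\<forall>j. 1 \<le> j \<and> j < \<delta> \<longrightarrow> \<xi> (j + 1) < \<xi> j)"

text \<open>Class B, up to cyclic rotation x \<mapsto> x + k of the labels.\<close>
definition classB :: "nat \<Rightarrow> nat set set \<Rightarrow> bool" where
  "classB m B \<longleftrightarrow> (\<exists>k \<alpha> \<beta> \<gamma> \<delta> \<eta> \<epsilon> \<xi>.
      classB_params m \<alpha> \<beta> \<gamma> \<delta> \<eta> \<epsilon> \<xi> \<and> B = classB_set m k \<alpha> \<beta> \<gamma> \<delta> \<eta> \<epsilon> \<xi>)"

end

theory Submission
  imports Defs
begin


definition stair :: "nat \<Rightarrow> (nat \<Rightarrow> int) \<Rightarrow> (nat \<Rightarrow> int) \<Rightarrow> (nat \<Rightarrow> int) \<Rightarrow> bool" where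
  "stair n z lo hi \<longleftrightarrow> lo 0 = z 0 \<and> hi 0 = z 0 \<and>
    (\<forall>t. Suc t < n \<longrightarrow>
       (z (Suc t) = lo t - 1 \<and> lo (Suc t) = lo t - 1 \<and> hi (Suc t) = hi t) \<or>
       (z (Suc t) = hi t + 1 \<and> hi (Suc t) = hi t + 1 \<and> lo (Suc t) = lo t))"

definition used :: "nat \<Rightarrow> (nat \<Rightarrow> int) \<Rightarrow> int \<Rightarrow> int \<Rightarrow> bool" where
  "used n z u v \<longleftrightarrow> (\<exists>t. Suc t < n \<and>
      {z t mod int n, z (Suc t) mod int n} = {u mod int n, v mod int n})"

lemma usedI: "Suc t < n \<Longrightarrow> z t = u \<Longrightarrow> z (Suc t) = v \<Longrightarrow> used n z u v"
  unfolding used_def by blast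

lemma usedI2: "Suc t < n \<Longrightarrow> z t mod int n = u mod int n \<Longrightarrow> z (Suc t) mod int n = v mod int n \<Longrightarrow> used n z u v"
  unfolding used_def by (rule exI[of _ t]) simp

lemma used_sym: "used n z u v = used n z v u"
  unfolding used_def by (simp add: insert_commute)

lemma used_mod: "u mod int n = u' mod int n \<Longrightarrow> v mod int n = v' mod int n \<Longrightarrow> used n z u v = used n z u' v'"
  unfolding used_def by simp

lemma stair_step:
  assumes "stair n z lo hi" "Suc t < n"
  shows "(z (Suc t) = lo t - 1 \<and> lo (Suc t) = lo t - 1 \<and> hi (Suc t) = hi t) \<or>
       (z (Suc t) = hi t + 1 \<and> hi (Suc t) = hi t + 1 \<and> lo (Suc t) = lo t)"
  using assms unfolding stair_def by blast

lemma stair_0: "stair n z lo hi \<Longrightarrow> lo 0 = z 0 \<and> hi 0 = z 0"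
  unfolding stair_def by blast

lemma stair_size: assumes "stair n z lo hi" "t < n" shows "hi t - lo t = int t"
  using assms(2)
proof (induction t)
  case 0 then show ?case using stair_0[OF assms(1)] by simp
next
  case (Suc t) then show ?case using stair_step[OF assms(1), of t] by auto
qed

lemma stair_z: assumes "stair n z lo hi" "t < n" shows "z t = lo t \<or> z t = hi t"
proof (cases t)
  case 0 then show ?thesis using stair_0[OF assms(1)] by simp
next
  case (Suc s) then show ?thesis using stair_step[OF assms(1), of s] assms(2) by auto
qed

lemma stair_mono: assumes "stair n z lo hi" "t \<le> t'" "t' < n" shows "lo t' \<le> lo t \<and> hi t \<le> hi t'"
  using assms(2,3)
proof (induction t' rule: dec_induct)
  case base then show ?case by simp
next
  case (step s) then show ?case using stair_step[OF assms(1), of s] by auto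
qed

lemma stair_range: assumes "stair n z lo hi" "t \<le> t'" "t' < n" shows "lo t' \<le> z t \<and> z t \<le> hi t'"
proof -
  have "lo t \<le> z t \<and> z t \<le> hi t" using stair_z[OF assms(1), of t] stair_size[OF assms(1), of t] assms by auto
  then show ?thesis using stair_mono[OF assms] by auto
qed

lemma stair_hi_ex: assumes "stair n z lo hi" "t < n" "hi 0 \<le> h" "h \<le> hi t"
  shows "\<exists>s\<le>t. hi s = h"
  using assms(2,4)
proof (induction t)
  case 0 then show ?case using assms(3) by auto
next
  case (Suc t)
  show ?case
  proof (cases "h \<le> hi t")
    case True then show ?thesis using Suc by (metis Suc_lessD le_SucI)
  next
    case False then have "hi (Suc t) = h" using stair_step[OF assms(1), of t] Suc.prems by auto
    then show ?thesis by blast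
  qed
qed

lemma stair_lo_ex: assumes "stair n z lo hi" "t < n" "lo t \<le> l" "l \<le> lo 0"
  shows "\<exists>s\<le>t. lo s = l"
  using assms(2,3)
proof (induction t)
  case 0 then show ?case using assms(4) by auto
next
  case (Suc t)
  show ?case
  proof (cases "lo t \<le> l")
    case True then show ?thesis using Suc by (metis Suc_lessD le_SucI)
  next
    case False then have "lo (Suc t) = l" using stair_step[OF assms(1), of t] Suc.prems by auto
    then show ?thesis by blast
  qed
qed

lemma stair_reflect: assumes "stair n z lo hi"
  shows "stair n (\<lambda>t. c - z t) (\<lambda>t. c - hi t) (\<lambda>t. c - lo t)"
  using assms unfolding stair_def by auto

lemma stair_shift: assumes "stair n z lo hi"
  shows "stair n (\<lambda>t. z t + c) (\<lambda>t. lo t + c) (\<lambda>t. hi t + c)"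
  using assms unfolding stair_def by auto

lemma mod_refl_iff: "((c - x) mod (n::int) = u mod n) = (x mod n = (c - u) mod n)"
proof -
  have "((c - x) mod n = u mod n) = (n dvd (c - x) - u)" by (simp add: mod_eq_dvd_iff)
  also have "\<dots> = (n dvd x - (c - u))"
    using dvd_diff_commute[of n "c - u" x] by (simp add: algebra_simps)
  also have "\<dots> = (x mod n = (c - u) mod n)" by (simp add: mod_eq_dvd_iff)
  finally show ?thesis .
qed

lemma mod_shift_iff: "((x + c) mod (n::int) = u mod n) = (x mod n = (u - c) mod n)"
proof -
  have "((x + c) mod n = u mod n) = (n dvd (x + c) - u)" by (simp add: mod_eq_dvd_iff)
  also have "\<dots> = (n dvd x - (u - c))" by (simp add: algebra_simps)
  also have "\<dots> = (x mod n = (u - c) mod n)" by (simp add: mod_eq_dvd_iff)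
  finally show ?thesis .
qed

lemma used_reflect: "used n (\<lambda>t. c - z t) u v = used n z (c - u) (c - v)"
  unfolding used_def doubleton_eq_iff mod_refl_iff by (simp add: mod_refl_iff)

lemma used_shift: "used n (\<lambda>t. z t + c) u v = used n z (u - c) (v - c)"
  unfolding used_def doubleton_eq_iff by (simp add: mod_shift_iff)


lemma vx_int: "n > 0 \<Longrightarrow> int (vx n u) = u mod int n"
  unfolding vx_def by simp

lemma vx_lt: "n > 0 \<Longrightarrow> vx n u < n"
  unfolding vx_def by (simp add: nat_less_iff)

lemma vx_eq_iff: "n > 0 \<Longrightarrow> (vx n u = vx n u') = (u mod int n = u' mod int n)"
  unfolding vx_def by (simp add: eq_nat_nat_iff)

lemma vx_nat: "x < n \<Longrightarrow> vx n (int x) = x"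
  unfolding vx_def by simp

lemma vx_rep: assumes "x < n" shows "\<exists>x'. l \<le> x' \<and> x' < l + int n \<and> x = vx n x'"
proof -
  have n: "n > 0" using assms by simp
  define x' where "x' = l + (int x - l) mod int n"
  have "l \<le> x'" "x' < l + int n" using n unfolding x'_def by simp_all
  moreover have "x' mod int n = int x mod int n" unfolding x'_def by (simp add: mod_add_right_eq)
  then have "vx n x' = vx n (int x)" using vx_eq_iff[OF n] by simp
  then have "vx n x' = x" using vx_nat[OF assms] by simp
  ultimately show ?thesis by blast
qed

lemma vx_inj: assumes "l \<le> u" "u < l + int n" "l \<le> u'" "u' < l + int n" "vx n u = vx n u'"
  shows "u = u'"
proof -
  have n: "n > 0" using assms by simp
  have "u mod int n = u' mod int n" using assms(5) vx_eq_iff[OF n] by simp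
  then have "(u - l) mod int n = (u' - l) mod int n" by (rule mod_diff_cong) simp
  moreover have "(u - l) mod int n = u - l" "(u' - l) mod int n = u' - l" using assms by simp_all
  ultimately show ?thesis by simp
qed

lemma cyc_vx: assumes "n > 0"
  shows "cyc_between n (vx n y) (vx n u) (vx n w) \<longleftrightarrow> 0 < (u - y) mod int n \<and> (u - y) mod int n < (w - y) mod int n"
proof -
  have "(int (vx n u) - int (vx n y)) mod int n = (u - y) mod int n"
    using assms by (simp add: vx_int mod_diff_eq)
  moreover have "(int (vx n w) - int (vx n y)) mod int n = (w - y) mod int n"
    using assms by (simp add: vx_int mod_diff_eq)
  ultimately show ?thesis unfolding cyc_between_def by simp
qed

lemma discrete_ivt: assumes "Q i" "\<not> Q k"
  shows "\<exists>j. min i k \<le> j \<and> j < max i k \<and> Q j \<noteq> Q (Suc j)"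
proof (cases "i < k")
  case True
  have "\<exists>j. i \<le> j \<and> j < k \<and> Q j \<noteq> Q (Suc j)" if "i < k" "\<not> Q k" for k
    using that
  proof (induction k)
    case 0 then show ?case by simp
  next
    case (Suc k)
    show ?case
    proof (cases "Q k")
      case True then show ?thesis using Suc by (intro exI[of _ k]) auto
    next
      case False
      then have "i \<noteq> k" using assms(1) by auto
      then have "i < k" using Suc.prems by simp
      then show ?thesis using Suc.IH False Suc.prems by (meson less_SucI)
    qed
  qed
  from this[OF True assms(2)] obtain j where "i \<le> j" "j < k" "Q j \<noteq> Q (Suc j)" by blast
  then show ?thesis using True by (intro exI[of _ j]) auto
next
  case False
  then have ki: "k < i" using assms by (cases "k = i") auto
  have "\<exists>j. k \<le> j \<and> j < i \<and> Q j \<noteq> Q (Suc j)" if "k < i" "Q i" for i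
    using that
  proof (induction i)
    case 0 then show ?case by simp
  next
    case (Suc i)
    show ?case
    proof (cases "Q i")
      case False then show ?thesis using Suc by (intro exI[of _ i]) auto
    next
      case True
      then have "i \<noteq> k" using assms(2) by auto
      then have "k < i" using Suc.prems by simp
      then show ?thesis using Suc.IH True Suc.prems by (meson less_SucI)
    qed
  qed
  from this[OF ki assms(1)] obtain j where "k \<le> j" "j < i" "Q j \<noteq> Q (Suc j)" by blast
  then show ?thesis using ki by (intro exI[of _ j]) auto
qed

lemma path_edgesI: "Suc i < length p \<Longrightarrow> {p ! i, p ! Suc i} \<in> path_edges p"
  unfolding path_edges_def by blast

lemma SHP_length: "SHP n p \<Longrightarrow> length p = n"
proof -
  assume "SHP n p"
  then have "distinct p" "set p = {0..<n}" unfolding SHP_def by auto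
  then have "card (set p) = length p" using distinct_card by blast
  moreover have "card (set p) = n" using \<open>set p = {0..<n}\<close> by simp
  ultimately show ?thesis by simp
qed

lemma geo_step:
  assumes shp: "SHP n p" and t: "Suc t < n"
    and arc: "set (take (Suc t) p) = vx n ` {l..h}" and sz: "h - l = int t"
  shows "p ! Suc t = vx n (l - 1) \<or> p ! Suc t = vx n (h + 1)"
proof (rule ccontr)
  assume nc: "\<not> ?thesis"
  have len: "length p = n" using SHP_length[OF shp] .
  have n0: "n > 0" using t by simp
  have dist: "distinct p" and setp: "set p = {0..<n}" and ncr: "\<forall>e\<in>path_edges p. \<forall>f\<in>path_edges p. \<not> crosses n e f"
    using shp unfolding SHP_def by auto
  define w where "w = p ! Suc t"
  have "w \<in> set p" using len t unfolding w_def by simp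
  then have wn: "w < n" using setp by simp
  have w_notin: "w \<notin> set (take (Suc t) p)"
    using dist t len unfolding w_def by (simp add: nth_eq_iff_index_eq in_set_conv_nth)
  obtain w' where w': "l \<le> w'" "w' < l + int n" "w = vx n w'" using vx_rep[OF wn, of l] by blast
  have "w' > h"
  proof (rule ccontr)
    assume "\<not> w' > h"
    then have "w \<in> vx n ` {l..h}" using w' by auto
    then show False using w_notin arc by simp
  qed
  have "w' \<noteq> h + 1" using nc w' unfolding w_def by auto
  moreover have "w' \<noteq> l + int n - 1"
  proof
    assume "w' = l + int n - 1"
    then have "w' = (l - 1) + int n" by simp
    then have "vx n w' = vx n (l - 1)" using vx_eq_iff[OF n0] by simp
    then show False using nc w' unfolding w_def by auto
  qed
  ultimately have w'r: "h + 2 \<le> w'" "w' \<le> l + int n - 2" using \<open>w' > h\<close> w' by auto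
  define v where "v = p ! t"
  have "v \<in> set (take (Suc t) p)" unfolding v_def using t len by (auto simp: in_set_conv_nth intro!: exI[of _ t])
  then have "v \<in> vx n ` {l..h}" using arc by simp
  then obtain y where "y \<in> {l..h}" "v = vx n y" by blast
  then have y: "l \<le> y" "y \<le> h" "v = vx n y" by auto
  define Q where "Q i = (\<exists>u. h + 1 \<le> u \<and> u \<le> w' - 1 \<and> p ! i = vx n u)" for i
  have inP: "\<exists>i<n. p ! i = x" if "x < n" for x
  proof -
    have "x \<in> set p" using that setp by simp
    then show ?thesis using len by (auto simp: in_set_conv_nth)
  qed
  obtain i1 where i1: "i1 < n" "p ! i1 = vx n (h + 1)" using inP[OF vx_lt[OF n0]] by blast
  obtain i2 where i2: "i2 < n" "p ! i2 = vx n (l + int n - 1)" using inP[OF vx_lt[OF n0]] by blast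
  have late: "i \<ge> Suc (Suc t)" if "i < n" "\<not> (l \<le> u \<and> u \<le> h)" "p ! i = vx n u" "u \<noteq> w'" "l \<le> u" "u < l + int n" for i u
  proof (rule ccontr)
    assume "\<not> i \<ge> Suc (Suc t)"
    then have "i \<le> Suc t" by simp
    show False
    proof (cases "i = Suc t")
      case True
      then have "vx n u = vx n w'" using that w' unfolding w_def by simp
      then have "u = w'" using vx_inj[of l u n w'] that w' by simp
      then show False using that by simp
    next
      case False
      then have "i < Suc t" using \<open>i \<le> Suc t\<close> by simp
      then have "p ! i \<in> set (take (Suc t) p)" using that len by (auto simp: in_set_conv_nth intro!: exI[of _ i])
      then have "p ! i \<in> vx n ` {l..h}" using arc by simp
      then obtain u' where "u' \<in> {l..h}" "p ! i = vx n u'" by blast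
      then have "l \<le> u'" "u' \<le> h" "p ! i = vx n u'" by auto
      then have "u = u'" using vx_inj[of l u n u'] that by simp
      then show False using that \<open>l \<le> u'\<close> \<open>u' \<le> h\<close> by simp
    qed
  qed
  have i1l: "i1 \<ge> Suc (Suc t)" using late[OF i1(1) _ i1(2)] w'r sz t by simp
  have i2l: "i2 \<ge> Suc (Suc t)" using late[OF i2(1) _ i2(2)] w'r sz t by simp
  have Q1: "Q i1" unfolding Q_def using i1 w'r by auto
  have Q2: "\<not> Q i2"
  proof
    assume "Q i2"
    then obtain u where u: "h + 1 \<le> u" "u \<le> w' - 1" "p ! i2 = vx n u" unfolding Q_def by blast
    then have "u = l + int n - 1" using vx_inj[of l u n "l + int n - 1"] i2 w'r y by simp
    then show False using u w'r by simp
  qed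
  obtain j where j: "min i1 i2 \<le> j" "j < max i1 i2" "Q j \<noteq> Q (Suc j)" using discrete_ivt[of Q i1 i2] Q1 Q2 by blast
  have jt: "j \<ge> Suc (Suc t)" "Suc j < n" using j i1l i2l i1 i2 by auto
  have classify: "\<exists>u. l \<le> u \<and> u < l + int n \<and> p ! i = vx n u \<and> h + 1 \<le> u \<and> u \<noteq> w'" if "i < n" "i \<ge> Suc (Suc t)" for i
  proof -
    have "p ! i \<in> set p" using len that by simp
    then have "p ! i < n" using setp by simp
    then obtain u where u: "l \<le> u" "u < l + int n" "p ! i = vx n u" using vx_rep[of "p ! i" n l] by blast
    have "u > h"
    proof (rule ccontr)
      assume "\<not> u > h"
      then have "u \<in> {l..h}" using u by simp
      then have "p ! i \<in> set (take (Suc t) p)" using arc u by simp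
      then obtain i' where "i' < Suc t" "p ! i' = p ! i" using t len by (auto simp: in_set_conv_nth)
      then show False using dist that len by (simp add: nth_eq_iff_index_eq)
    qed
    moreover have "u \<noteq> w'"
    proof
      assume "u = w'"
      then have "p ! i = p ! Suc t" using u w' unfolding w_def by simp
      then show False using dist that len t by (simp add: nth_eq_iff_index_eq)
    qed
    ultimately show ?thesis using u by auto
  qed
  obtain u1 where u1: "l \<le> u1" "u1 < l + int n" "p ! j = vx n u1" "h + 1 \<le> u1" "u1 \<noteq> w'" using classify[of j] jt by auto
  obtain u2 where u2: "l \<le> u2" "u2 < l + int n" "p ! Suc j = vx n u2" "h + 1 \<le> u2" "u2 \<noteq> w'" using classify[of "Suc j"] jt by auto
  have Qiff: "Q i = (u < w')" if "l \<le> u" "u < l + int n" "p ! i = vx n u" "h + 1 \<le> u" "u \<noteq> w'" for i u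
  proof
    assume "Q i"
    then obtain u' where "h + 1 \<le> u'" "u' \<le> w' - 1" "p ! i = vx n u'" unfolding Q_def by blast
    then have "u = u'" using vx_inj[of l u n u'] that w'r y by simp
    then show "u < w'" using \<open>u' \<le> w' - 1\<close> by simp
  next
    assume "u < w'" then show "Q i" unfolding Q_def using that by auto
  qed
  have cb: "cyc_between n v (vx n u) w = (u < w')" if "h + 1 \<le> u" "u < l + int n" "u \<noteq> w'" for u
  proof -
    have e1: "(u - y) mod int n = u - y" using that y by simp
    have e2: "(w' - y) mod int n = w' - y" using w'r y by simp
    show ?thesis unfolding y(3) w'(3) cyc_vx[OF n0] e1 e2 using that y by auto
  qed
  have "cyc_between n v (p ! j) w \<noteq> cyc_between n v (p ! Suc j) w"
    using cb[of u1] cb[of u2] u1 u2 Qiff[OF u1] Qiff[OF u2] j(3) by auto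
  moreover have "distinct [v, w, p ! j, p ! Suc j]"
  proof -
    have "\<And>a b. a < n \<Longrightarrow> b < n \<Longrightarrow> (p ! a = p ! b) = (a = b)" using dist len by (simp add: nth_eq_iff_index_eq)
    then show ?thesis using jt t unfolding v_def w_def by auto
  qed
  ultimately have "crosses n {v, w} {p ! j, p ! Suc j}" unfolding crosses_def by blast
  moreover have "{v, w} \<in> path_edges p" unfolding v_def w_def using t len path_edgesI by simp
  moreover have "{p ! j, p ! Suc j} \<in> path_edges p" using jt len path_edgesI by simp
  ultimately show False using ncr by blast
qed


fun lhf :: "nat \<Rightarrow> nat list \<Rightarrow> nat \<Rightarrow> int \<times> int" where
  "lhf n p 0 = (int (p ! 0), int (p ! 0))"
| "lhf n p (Suc t) = (case lhf n p t of (l, h) \<Rightarrow>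
      if vx n (h + 1) = p ! Suc t then (l, h + 1) else (l - 1, h))"

lemma SHP_stair:
  assumes shp: "SHP n p" and n: "n > 0"
  shows "\<exists>z lo hi. stair n z lo hi \<and> (\<forall>t<n. p ! t = vx n (z t))"
proof -
  define lo where "lo t = fst (lhf n p t)" for t
  define hi where "hi t = snd (lhf n p t)" for t
  define z where "z t = (case t of 0 \<Rightarrow> int (p ! 0) | Suc s \<Rightarrow>
      (if vx n (hi s + 1) = p ! Suc s then hi s + 1 else lo s - 1))" for t
  have lhS: "lo (Suc t) = (if vx n (hi t + 1) = p ! Suc t then lo t else lo t - 1) \<and>
             hi (Suc t) = (if vx n (hi t + 1) = p ! Suc t then hi t + 1 else hi t)" for t
    unfolding lo_def hi_def by (simp split: prod.split)
  have st: "stair n z lo hi"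
    unfolding stair_def
  proof (intro conjI allI impI)
    show "lo 0 = z 0" "hi 0 = z 0" unfolding lo_def hi_def z_def by simp_all
  next
    fix t assume "Suc t < n"
    show "(z (Suc t) = lo t - 1 \<and> lo (Suc t) = lo t - 1 \<and> hi (Suc t) = hi t) \<or>
       (z (Suc t) = hi t + 1 \<and> hi (Suc t) = hi t + 1 \<and> lo (Suc t) = lo t)"
      using lhS[of t] unfolding z_def by auto
  qed
  have len: "length p = n" using SHP_length[OF shp] .
  have setp: "set p = {0..<n}" using shp unfolding SHP_def by auto
  have p0: "p ! 0 < n"
  proof -
    have "p ! 0 \<in> set p" using len n by simp
    then show ?thesis using setp by simp
  qed
  have inv: "set (take (Suc t) p) = vx n ` {lo t..hi t} \<and> p ! t = vx n (z t)" if "t < n" for t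
    using that
  proof (induction t)
    case 0
    have "take (Suc 0) p = [p ! 0]" using len n by (cases p) auto
    moreover have "lo 0 = int (p ! 0)" "hi 0 = int (p ! 0)" "z 0 = int (p ! 0)" unfolding lo_def hi_def z_def by simp_all
    ultimately show ?case using vx_nat[OF p0] by simp
  next
    case (Suc t)
    then have IH: "set (take (Suc t) p) = vx n ` {lo t..hi t}" by simp
    have sz: "hi t - lo t = int t" using stair_size[OF st, of t] Suc.prems by simp
    have g: "p ! Suc t = vx n (lo t - 1) \<or> p ! Suc t = vx n (hi t + 1)"
      using geo_step[OF shp Suc.prems IH sz] .
    have tk: "take (Suc (Suc t)) p = take (Suc t) p @ [p ! Suc t]"
      using Suc.prems len by (simp add: take_Suc_conv_app_nth)
    show ?case
    proof (cases "vx n (hi t + 1) = p ! Suc t")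
      case True
      then have e: "lo (Suc t) = lo t" "hi (Suc t) = hi t + 1" "z (Suc t) = hi t + 1"
        using lhS[of t] unfolding z_def by auto
      have "{lo t..hi t + 1} = insert (hi t + 1) {lo t..hi t}" using sz by auto
      then show ?thesis using tk IH e True by simp
    next
      case False
      then have e: "lo (Suc t) = lo t - 1" "hi (Suc t) = hi t" "z (Suc t) = lo t - 1"
        using lhS[of t] unfolding z_def by auto
      have pv: "p ! Suc t = vx n (lo t - 1)" using g False by auto
      have "{lo t - 1..hi t} = insert (lo t - 1) {lo t..hi t}" using sz by auto
      then show ?thesis using tk IH e pv by simp
    qed
  qed
  show ?thesis using st inv by blast
qed

lemma path_edges_rev_sub: "path_edges (rev p) \<subseteq> path_edges p"
proof
  fix e assume "e \<in> path_edges (rev p)"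
  then obtain i where i: "e = {rev p ! i, rev p ! Suc i}" "Suc i < length p" unfolding path_edges_def by auto
  define j where "j = length p - 2 - i"
  have j1: "length p - Suc i = Suc j" "length p - Suc (Suc i) = j" "Suc j < length p"
    using i(2) unfolding j_def by auto
  have "rev p ! i = p ! Suc j" using i(2) j1 by (simp add: rev_nth)
  moreover have "rev p ! Suc i = p ! j" using i(2) j1 by (simp add: rev_nth)
  ultimately have "e = {p ! j, p ! Suc j}" using i(1) by auto
  then show "e \<in> path_edges p" using j1(3) unfolding path_edges_def by blast
qed

lemma path_edges_rev: "path_edges (rev p) = path_edges p"
  using path_edges_rev_sub[of p] path_edges_rev_sub[of "rev p"] by simp

lemma rev_SHP: "SHP n p \<Longrightarrow> SHP n (rev p)"
  unfolding SHP_def path_edges_rev by simp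


lemma caseA:
  fixes m :: nat and \<alpha> \<beta> \<gamma> \<delta> \<eta> :: int and \<epsilon> \<xi> :: "int \<Rightarrow> int"
  assumes par: "classB_params m \<alpha> \<beta> \<gamma> \<delta> \<eta> \<epsilon> \<xi>"
    and n: "n = 2 * m - 1"
    and st: "stair n z lo hi"
    and start: "(z 0 = \<alpha> + \<beta> \<and> z 1 = \<alpha> + \<beta> + 1) \<or> (z 0 = \<alpha> + \<beta> + 1 \<and> z 1 = \<alpha> + \<beta>)"
    and P1: "\<forall>x. \<alpha> \<le> x \<and> x < \<alpha> + \<beta> \<longrightarrow> \<not> used n z x (x + 1)"
    and P2: "\<forall>x. \<alpha> + \<beta> + 1 \<le> x \<and> x < int m - \<delta> \<longrightarrow> \<not> used n z x (x + 1)"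
    and ET: "\<not> used n z (\<alpha> + \<beta> - \<eta>) (\<alpha> + \<beta> + 1 + \<eta>)"
  shows False
proof -
  define g where "g = \<alpha> + \<beta>"
  have pp: "0 \<le> \<alpha>" "0 \<le> \<delta>" "2 \<le> \<beta>" "2 \<le> \<gamma>" "\<alpha> + \<delta> \<le> int m - 5"
    "\<beta> + \<gamma> = int m - \<alpha> - \<delta> - 1" "1 \<le> \<eta>" "\<eta> \<le> \<beta> - 1" "\<eta> \<le> \<gamma> - 1"
    using par unfolding classB_params_def by auto
  have nn: "int n = 2 * int m - 1" using n pp by simp
  define e where "e = nat \<eta>"
  have e: "int e = \<eta>" using pp unfolding e_def by simp
  have lt: "Suc (2 * j + 1) < n" if "j < e" for j using that e pp nn by linarith
  have z0: "lo 0 = z 0" "hi 0 = z 0" using stair_0[OF st] by auto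
  have n2: "1 < n" using nn pp by linarith
  show False
  proof (cases "z 0 = g")
    case True
    then have z1: "z 1 = g + 1" using start unfolding g_def by auto
    have claim: "z (2 * j) = g - int j \<and> z (2 * j + 1) = g + 1 + int j \<and>
                 lo (2 * j + 1) = g - int j \<and> hi (2 * j + 1) = g + 1 + int j" if "j \<le> e" for j
      using that
    proof (induction j)
      case 0
      have "lo 1 = g \<and> hi 1 = g + 1" using stair_step[OF st, of 0] n2 z0 True z1 by auto
      then show ?case using True z1 by simp
    next
      case (Suc j)
      then have IH: "z (2 * j) = g - int j" "z (2 * j + 1) = g + 1 + int j"
          "lo (2 * j + 1) = g - int j" "hi (2 * j + 1) = g + 1 + int j" by auto
      have jl: "j < e" using Suc.prems by simp
      have l1: "Suc (2 * j + 1) < n" using lt[OF jl] .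
      have l0: "Suc (Suc (2 * j + 1)) < n" using jl e pp nn by linarith
      have s1: "z (Suc (2 * j + 1)) = g - int j - 1 \<and> lo (Suc (2 * j + 1)) = g - int j - 1 \<and> hi (Suc (2 * j + 1)) = g + 1 + int j"
      proof -
        have "\<not> (z (Suc (2 * j + 1)) = hi (2 * j + 1) + 1)"
        proof
          assume a: "z (Suc (2 * j + 1)) = hi (2 * j + 1) + 1"
          have "used n z (g + 1 + int j) (g + 1 + int j + 1)"
            using usedI[OF l1] IH a by simp
          moreover have "\<alpha> + \<beta> + 1 \<le> g + 1 + int j" "g + 1 + int j < int m - \<delta>"
            using jl e pp unfolding g_def by linarith+
          ultimately show False using P2 unfolding g_def by blast
        qed
        then show ?thesis using stair_step[OF st l1] IH by auto
      qed
      have s2: "z (Suc (Suc (2 * j + 1))) = g + 1 + int j + 1 \<and> lo (Suc (Suc (2 * j + 1))) = g - int j - 1 \<and> hi (Suc (Suc (2 * j + 1))) = g + 1 + int j + 1"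
      proof -
        have "\<not> (z (Suc (Suc (2 * j + 1))) = lo (Suc (2 * j + 1)) - 1)"
        proof
          assume a: "z (Suc (Suc (2 * j + 1))) = lo (Suc (2 * j + 1)) - 1"
          have "used n z (g - int j - 1) (g - int j - 1 - 1)"
            using usedI[OF l0] s1 a by simp
          then have "used n z (g - int j - 1 - 1) (g - int j - 1 - 1 + 1)" using used_sym by simp
          moreover have "\<alpha> \<le> g - int j - 1 - 1" "g - int j - 1 - 1 < \<alpha> + \<beta>"
            using jl e pp unfolding g_def by linarith+
          ultimately show False using P1 by blast
        qed
        then show ?thesis using stair_step[OF st l0] s1 by auto
      qed
      have "2 * Suc j = Suc (2 * j + 1)" "2 * Suc j + 1 = Suc (Suc (2 * j + 1))" by simp_all
      then show ?case using s1 s2 by simp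
    qed
    have "used n z (g - \<eta>) (g + 1 + \<eta>)"
    proof -
      have c: "z (2 * e) = g - \<eta>" "z (Suc (2 * e)) = g + 1 + \<eta>" using claim[of e] e by auto
      have "Suc (2 * e) < n" using e pp nn by linarith
      then show ?thesis using usedI[of "2 * e" n z] c by simp
    qed
    then show False using ET unfolding g_def by simp
  next
    case False
    then have zz: "z 0 = g + 1" "z 1 = g" using start unfolding g_def by auto
    have claim: "z (2 * j) = g + 1 + int j \<and> z (2 * j + 1) = g - int j \<and>
                 lo (2 * j + 1) = g - int j \<and> hi (2 * j + 1) = g + 1 + int j" if "j \<le> e" for j
      using that
    proof (induction j)
      case 0
      have "lo 1 = g \<and> hi 1 = g + 1" using stair_step[OF st, of 0] n2 z0 zz by auto
      then show ?case using zz by simp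
    next
      case (Suc j)
      then have IH: "z (2 * j) = g + 1 + int j" "z (2 * j + 1) = g - int j"
          "lo (2 * j + 1) = g - int j" "hi (2 * j + 1) = g + 1 + int j" by auto
      have jl: "j < e" using Suc.prems by simp
      have l1: "Suc (2 * j + 1) < n" using lt[OF jl] .
      have l0: "Suc (Suc (2 * j + 1)) < n" using jl e pp nn by linarith
      have s1: "z (Suc (2 * j + 1)) = g + 1 + int j + 1 \<and> lo (Suc (2 * j + 1)) = g - int j \<and> hi (Suc (2 * j + 1)) = g + 1 + int j + 1"
      proof -
        have "\<not> (z (Suc (2 * j + 1)) = lo (2 * j + 1) - 1)"
        proof
          assume a: "z (Suc (2 * j + 1)) = lo (2 * j + 1) - 1"
          have "used n z (g - int j) (g - int j - 1)"
            using usedI[OF l1] IH a by simp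
          then have "used n z (g - int j - 1) (g - int j - 1 + 1)" using used_sym by simp
          moreover have "\<alpha> \<le> g - int j - 1" "g - int j - 1 < \<alpha> + \<beta>"
            using jl e pp unfolding g_def by linarith+
          ultimately show False using P1 by blast
        qed
        then show ?thesis using stair_step[OF st l1] IH by auto
      qed
      have s2: "z (Suc (Suc (2 * j + 1))) = g - int j - 1 \<and> lo (Suc (Suc (2 * j + 1))) = g - int j - 1 \<and> hi (Suc (Suc (2 * j + 1))) = g + 1 + int j + 1"
      proof -
        have "\<not> (z (Suc (Suc (2 * j + 1))) = hi (Suc (2 * j + 1)) + 1)"
        proof
          assume a: "z (Suc (Suc (2 * j + 1))) = hi (Suc (2 * j + 1)) + 1"
          have "used n z (g + 1 + int j + 1) (g + 1 + int j + 1 + 1)"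
            using usedI[OF l0] s1 a by simp
          moreover have "\<alpha> + \<beta> + 1 \<le> g + 1 + int j + 1" "g + 1 + int j + 1 < int m - \<delta>"
            using jl e pp unfolding g_def by linarith+
          ultimately show False using P2 unfolding g_def by blast
        qed
        then show ?thesis using stair_step[OF st l0] s1 by auto
      qed
      have "2 * Suc j = Suc (2 * j + 1)" "2 * Suc j + 1 = Suc (Suc (2 * j + 1))" by simp_all
      then show ?case using s1 s2 by simp
    qed
    have "used n z (g + 1 + \<eta>) (g - \<eta>)"
    proof -
      have c: "z (2 * e) = g + 1 + \<eta>" "z (Suc (2 * e)) = g - \<eta>" using claim[of e] e by auto
      have "Suc (2 * e) < n" using e pp nn by linarith
      then show ?thesis using usedI[of "2 * e" n z] c by simp
    qed
    then show False using ET used_sym unfolding g_def by metis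
  qed
qed


lemma dec_lower:
  fixes f :: "int \<Rightarrow> int" and A :: int
  assumes pos: "\<forall>i. 1 \<le> i \<and> i \<le> A \<longrightarrow> 0 < f i"
    and dec: "\<forall>i. 1 \<le> i \<and> i < A \<longrightarrow> f (i + 1) < f i"
    and i: "1 \<le> i" "i \<le> A"
  shows "A + 1 - i \<le> f i"
proof -
  have "\<forall>i. 1 \<le> i \<and> i \<le> A \<and> A - i = int k \<longrightarrow> A + 1 - i \<le> f i" for k
  proof (induction k)
    case 0 then show ?case using pos by force
  next
    case (Suc k)
    show ?case
    proof (intro allI impI)
      fix i assume a: "1 \<le> i \<and> i \<le> A \<and> A - i = int (Suc k)"
      then have "1 \<le> i + 1 \<and> i + 1 \<le> A \<and> A - (i + 1) = int k" by auto
      then have "A + 1 - (i + 1) \<le> f (i + 1)" using Suc.IH by blast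
      moreover have "f (i + 1) < f i" using dec a by auto
      ultimately show "A + 1 - i \<le> f i" by linarith
    qed
  qed
  then show ?thesis using i by (metis nonneg_int_cases diff_ge_0_iff_ge)
qed

lemma dec_upper:
  fixes f :: "int \<Rightarrow> int" and A C :: int
  assumes bnd: "\<forall>i. 1 \<le> i \<and> i \<le> A \<longrightarrow> f i < C"
    and dec: "\<forall>i. 1 \<le> i \<and> i < A \<longrightarrow> f (i + 1) < f i"
    and i: "1 \<le> i" "i \<le> A"
  shows "f i \<le> C - i"
proof -
  have "\<forall>i. 1 \<le> i \<and> i \<le> A \<and> i - 1 = int k \<longrightarrow> f i \<le> C - i" for k
  proof (induction k)
    case 0 then show ?case using bnd by force
  next
    case (Suc k)
    show ?case
    proof (intro allI impI)
      fix i assume a: "1 \<le> i \<and> i \<le> A \<and> i - 1 = int (Suc k)"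
      then have "1 \<le> i - 1 \<and> i - 1 \<le> A \<and> i - 1 - 1 = int k" by auto
      then have "f (i - 1) \<le> C - (i - 1)" using Suc.IH by blast
      moreover have "1 \<le> i - 1 \<and> i - 1 < A" using a by auto
      then have "f (i - 1 + 1) < f (i - 1)" using dec by blast
      ultimately show "f i \<le> C - i" by simp
    qed
  qed
  then show ?thesis using i by (metis nonneg_int_cases diff_ge_0_iff_ge)
qed

lemma sweep:
  fixes m :: nat and \<alpha> \<beta> \<gamma> \<delta> \<eta> :: int and \<epsilon> \<xi> :: "int \<Rightarrow> int"
  assumes par: "classB_params m \<alpha> \<beta> \<gamma> \<delta> \<eta> \<epsilon> \<xi>"
    and n: "n = 2 * m - 1"
    and st: "stair n z lo hi"
    and z0: "z 0 \<le> \<alpha>"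
    and P1: "\<forall>x. \<alpha> \<le> x \<and> x < \<alpha> + \<beta> \<longrightarrow> \<not> used n z x (x + 1)"
    and P2: "\<forall>x. \<alpha> + \<beta> + 1 \<le> x \<and> x < int m - \<delta> \<longrightarrow> \<not> used n z x (x + 1)"
    and E: "\<forall>i. 1 \<le> i \<and> i \<le> \<alpha> \<longrightarrow> \<not> used n z (i - 1 - \<epsilon> i) (i + \<epsilon> i)"
    and X: "\<forall>j. 1 \<le> j \<and> j \<le> \<delta> \<longrightarrow> \<not> used n z (int m - j - \<xi> j) (int m - j + 1 + \<xi> j)"
    and fin: "hi (n - 1) \<ge> int m - \<delta> \<or> (hi (n - 1) = int m - \<delta> - 1 \<and> z (n - 1) = lo (n - 1))"
  shows False
proof -
  have pp: "0 \<le> \<alpha>" "0 \<le> \<delta>" "2 \<le> \<beta>" "2 \<le> \<gamma>" "\<alpha> + \<delta> \<le> int m - 5"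
    "\<beta> + \<gamma> = int m - \<alpha> - \<delta> - 1"
    and epos: "\<forall>i. 1 \<le> i \<and> i \<le> \<alpha> \<longrightarrow> 0 < \<epsilon> i"
    and ebd: "\<forall>i. 1 \<le> i \<and> i \<le> \<alpha> \<longrightarrow> \<epsilon> i < \<alpha> + \<beta> - 1"
    and edec: "\<forall>i. 1 \<le> i \<and> i < \<alpha> \<longrightarrow> \<epsilon> (i + 1) < \<epsilon> i"
    and xpos: "\<forall>j. 1 \<le> j \<and> j \<le> \<delta> \<longrightarrow> 0 < \<xi> j"
    and xbd: "\<forall>j. 1 \<le> j \<and> j \<le> \<delta> \<longrightarrow> \<xi> j < \<gamma> + \<delta> - 1"
    and xdec: "\<forall>j. 1 \<le> j \<and> j < \<delta> \<longrightarrow> \<xi> (j + 1) < \<xi> j"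
    using par unfolding classB_params_def by auto
  define a where "a = \<alpha>"
  define g where "g = \<alpha> + \<beta>"
  define b where "b = int m - \<delta>"
  have nn: "int n = 2 * int m - 1" using n pp by simp
  have n5: "n \<ge> 9" using nn pp by linarith
  have epsl: "\<alpha> + 1 - i \<le> \<epsilon> i" "\<epsilon> i \<le> \<alpha> + \<beta> - 1 - i" if "1 \<le> i" "i \<le> \<alpha>" for i
    using dec_lower[OF epos edec that] dec_upper[OF ebd edec that] by auto
  have xil: "\<delta> + 1 - j \<le> \<xi> j" "\<xi> j \<le> \<gamma> + \<delta> - 1 - j" if "1 \<le> j" "j \<le> \<delta>" for j
    using dec_lower[OF xpos xdec that] dec_upper[OF xbd xdec that] by auto
  define Hs where "Hs = (if hi (n - 1) \<ge> b then b else b - 1)"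
  have Hs: "Hs \<le> hi (n - 1)" "b - 1 \<le> Hs" "Hs \<le> b" using fin unfolding Hs_def b_def by auto
  have h0: "hi 0 = z 0" using stair_0[OF st] by simp
  define arr where "arr h = (LEAST t. hi t = h)" for h
  have A1: "arr h < n \<and> hi (arr h) = h \<and> 0 < arr h \<and> hi (arr h - 1) = h - 1 \<and> z (arr h) = h
            \<and> lo (arr h) = lo (arr h - 1) \<and> (\<forall>t. t < arr h \<longrightarrow> hi t < h)"
    if za: "z 0 < h" and zb: "h \<le> hi (n - 1)" for h
  proof -
    obtain s where s: "s \<le> n - 1" "hi s = h" using stair_hi_ex[OF st, of "n - 1" h] za zb h0 n5 by auto
    have ar: "arr h \<le> s" "hi (arr h) = h" unfolding arr_def using s by (auto intro: Least_le LeastI)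
    have bef: "hi t < h" if tl: "t < arr h" for t
    proof (rule ccontr)
      assume "\<not> hi t < h"
      moreover have "t < n" using tl ar s n5 by simp
      ultimately obtain s' where "s' \<le> t" "hi s' = h" using stair_hi_ex[OF st, of t h] h0 za by auto
      then have "arr h \<le> s'" unfolding arr_def by (auto intro: Least_le)
      then show False using tl \<open>s' \<le> t\<close> by simp
    qed
    have a0: "arr h \<noteq> 0"
    proof
      assume "arr h = 0"
      then have "hi 0 = h" using ar by simp
      then show False using h0 za by simp
    qed
    have an: "arr h < n" using ar s n5 by simp
    have stp: "Suc (arr h - 1) < n" using a0 an by simp
    have hb: "hi (arr h - 1) < h" using bef a0 by simp
    have "z (arr h) = hi (arr h - 1) + 1 \<and> hi (arr h) = hi (arr h - 1) + 1 \<and> lo (arr h) = lo (arr h - 1)"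
      using stair_step[OF st stp] a0 hb ar by auto
    then show ?thesis using ar a0 an bef by auto
  qed
  have zlt: "z 0 < h" if "a + 1 \<le> h" for h using that z0 unfolding a_def by simp
  have hle: "h \<le> hi (n - 1)" if "h \<le> Hs" for h using that Hs by simp
  have arr_mono: "arr h < arr h'" if "z 0 < h" "h < h'" "h' \<le> hi (n - 1)" for h h'
  proof (rule ccontr)
    assume "\<not> arr h < arr h'"
    then have "hi (arr h') \<le> hi (arr h)" using stair_mono[OF st, of "arr h'" "arr h"] A1[of h] that by simp
    then show False using A1[of h] A1[of h'] that by simp
  qed
  have P: "\<not> used n z x (x + 1)" if "a \<le> x" "x < b" "x \<noteq> g" for x
    using P1 P2 that unfolding a_def b_def g_def by (cases "x < \<alpha> + \<beta>") auto
  have A2: "2 \<le> arr h \<and> z (arr h - 1) = lo (arr h - 1) \<and> lo (arr h - 1) = lo (arr h - 2) - 1 \<and>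
            used n z (lo (arr h)) h"
    if "a + 1 \<le> h" "h \<le> Hs" "h \<noteq> g + 1" for h
  proof -
    let ?t = "arr h"
    have a1: "?t < n" "hi ?t = h" "0 < ?t" "hi (?t - 1) = h - 1" "z ?t = h" "lo ?t = lo (?t - 1)"
      using A1[OF zlt[OF that(1)] hle[OF that(2)]] by auto
    have s1: "Suc (?t - 1) < n" "Suc (?t - 1) = ?t" using a1 by auto
    have "z (?t - 1) \<noteq> hi (?t - 1)"
    proof
      assume "z (?t - 1) = hi (?t - 1)"
      then have "used n z (h - 1) (h - 1 + 1)" using usedI[OF s1(1)] s1(2) a1 by simp
      moreover have "a \<le> h - 1" "h - 1 < b" "h - 1 \<noteq> g" using that Hs by auto
      ultimately show False using P by blast
    qed
    then have zl: "z (?t - 1) = lo (?t - 1)" using stair_z[OF st, of "?t - 1"] a1 by auto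
    then have "?t - 1 \<noteq> 0" using stair_0[OF st] \<open>z (?t - 1) \<noteq> hi (?t - 1)\<close> by auto
    then have t2: "2 \<le> ?t" by simp
    have s2: "Suc (?t - 2) < n" "Suc (?t - 2) = ?t - 1" using t2 a1 by auto
    have "lo (?t - 1) = lo (?t - 2) - 1"
      using stair_step[OF st s2(1)] s2(2) zl \<open>z (?t - 1) \<noteq> hi (?t - 1)\<close> by auto
    moreover have "used n z (lo ?t) h" using usedI[OF s1(1)] s1(2) a1 zl by simp
    ultimately show ?thesis using t2 zl by simp
  qed
  have A3: "lo (arr h) \<le> lo (arr (h - 1)) - 1" if "a + 2 \<le> h" "h \<le> Hs" "h \<noteq> g + 1" for h
  proof -
    let ?t = "arr h" and ?s = "arr (h - 1)"
    have a2: "2 \<le> ?t" "z (?t - 1) = lo (?t - 1)" "lo (?t - 1) = lo (?t - 2) - 1" using A2[of h] that by auto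
    have a1: "?t < n" "hi (?t - 1) = h - 1" "lo ?t = lo (?t - 1)" using A1[OF zlt hle[OF that(2)]] that by auto
    have b1: "hi ?s = h - 1" "z ?s = h - 1" using A1[OF zlt hle] that Hs by auto
    have lt: "?s < ?t" using arr_mono[of "h - 1" h] zlt[of "h - 1"] that hle[OF that(2)] by simp
    have "?s \<noteq> ?t - 1"
    proof
      assume "?s = ?t - 1"
      then have "lo (?t - 1) = hi (?t - 1)" using a2 b1 a1 by simp
      moreover have "hi (?t - 1) - lo (?t - 1) = int (?t - 1)" using stair_size[OF st, of "?t - 1"] a1 by simp
      ultimately show False using a2 by simp
    qed
    then have "?s \<le> ?t - 2" using lt by simp
    then have "lo (?t - 2) \<le> lo ?s" using stair_mono[OF st, of ?s "?t - 2"] a1 by simp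
    then show ?thesis using a1 a2 by simp
  qed
  have A4: "lo (arr h') \<le> lo (arr h)" if "a + 1 \<le> h" "h \<le> h'" "h' \<le> Hs" for h h'
  proof (cases "h = h'")
    case True then show ?thesis by simp
  next
    case False
    then have "arr h < arr h'" using arr_mono[of h h'] zlt[OF that(1)] that hle by simp
    then show ?thesis using stair_mono[OF st, of "arr h" "arr h'"] A1[OF zlt hle[OF that(3)]] that by simp
  qed
  have A5: "used n z h (lo (arr h) - 1)" if "a + 1 \<le> h" "h \<le> Hs" "Suc (arr h) < n" "hi (Suc (arr h)) = h" for h
  proof -
    have a1: "hi (arr h) = h" "z (arr h) = h" using A1[OF zlt[OF that(1)] hle[OF that(2)]] by auto
    have "z (Suc (arr h)) = lo (arr h) - 1" using stair_step[OF st that(3)] a1 that(4) by auto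
    then show ?thesis using usedI[OF that(3)] a1 by simp
  qed
  have A5a: "Suc (arr h) < n \<and> hi (Suc (arr h)) = h" if "a + 1 \<le> h" "h < Hs" "h \<noteq> g" for h
  proof -
    let ?t = "arr (h + 1)"
    have a2: "2 \<le> ?t" "z (?t - 1) = lo (?t - 1)" using A2[of "h + 1"] that by auto
    have a1: "?t < n" "hi (?t - 1) = h" using A1[OF zlt hle, of "h + 1"] that by auto
    have b1: "hi (arr h) = h" "z (arr h) = h" using A1[OF zlt[OF that(1)] hle] that by auto
    have lt: "arr h < ?t" using arr_mono[of h "h + 1"] zlt[OF that(1)] hle[of "h + 1"] that by simp
    have "arr h \<noteq> ?t - 1"
    proof
      assume "arr h = ?t - 1"
      then have "lo (?t - 1) = hi (?t - 1)" using a2 b1 a1 by simp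
      moreover have "hi (?t - 1) - lo (?t - 1) = int (?t - 1)" using stair_size[OF st, of "?t - 1"] a1 by simp
      ultimately show False using a2 by simp
    qed
    then have le: "Suc (arr h) \<le> ?t - 1" using lt by simp
    then have "hi (Suc (arr h)) \<le> h" using stair_mono[OF st le] a1 by simp
    moreover have "hi (arr h) \<le> hi (Suc (arr h))" using stair_mono[OF st, of "arr h" "Suc (arr h)"] le a1 by simp
    ultimately show ?thesis using le a1 b1 by simp
  qed
  define sg where "sg h = lo (arr h) + h" for h
  have SM: "sg (h + int k) \<le> sg h" if "a + 1 \<le> h" "h + int k \<le> Hs" "h + int k \<le> g \<or> g + 1 \<le> h" for h k
    using that
  proof (induction k)
    case 0 then show ?case by simp
  next
    case (Suc k)
    have ne: "h + int k + 1 \<noteq> g + 1" using Suc.prems by auto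
    have "lo (arr (h + int k + 1)) \<le> lo (arr (h + int k)) - 1"
      using A3[of "h + int k + 1"] Suc.prems ne by simp
    moreover have eq: "h + int (Suc k) = h + int k + 1" by simp
    have "sg (h + int (Suc k)) = lo (arr (h + int k + 1)) + (h + int k + 1)" unfolding sg_def eq by (rule refl)
    moreover have "sg (h + int k) = lo (arr (h + int k)) + (h + int k)" unfolding sg_def by (rule refl)
    ultimately have "sg (h + int (Suc k)) \<le> sg (h + int k)" by linarith
    moreover have "sg (h + int k) \<le> sg h" using Suc by auto
    ultimately show ?case by simp
  qed
  have SM': "sg h' \<le> sg h" if "a + 1 \<le> h" "h \<le> h'" "h' \<le> Hs" "h' \<le> g \<or> g + 1 \<le> h" for h h'
    using SM[of h "nat (h' - h)"] that by simp
  have gap: "sg (g + 1) \<le> sg g + 1"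
    using A4[of g "g + 1"] Hs pp unfolding sg_def g_def a_def b_def by simp
  have base: "sg (a + 1) \<le> 2 * a"
  proof -
    have c: "a + 1 \<le> Hs" "a + 1 \<noteq> g + 1" using Hs pp unfolding a_def g_def b_def by auto
    have "2 \<le> arr (a + 1)" using A2[of "a + 1"] c by simp
    moreover have "hi (arr (a + 1) - 1) = a" "lo (arr (a + 1)) = lo (arr (a + 1) - 1)" "arr (a + 1) < n"
      using A1[OF zlt hle, of "a + 1"] c by auto
    moreover have "hi (arr (a + 1) - 1) - lo (arr (a + 1) - 1) = int (arr (a + 1) - 1)"
      using stair_size[OF st, of "arr (a + 1) - 1"] calculation by simp
    ultimately show ?thesis unfolding sg_def by simp
  qed
  have OE: "sg (i + \<epsilon> i) \<noteq> 2 * i - 1 \<and> sg (i + \<epsilon> i) \<noteq> 2 * i" if "1 \<le> i" "i \<le> \<alpha>" for i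
  proof -
    let ?h = "i + \<epsilon> i"
    have hr: "a + 1 \<le> ?h" "?h \<le> g - 1" using epsl[OF that] unfolding a_def g_def by auto
    have hs: "?h < Hs" "?h \<noteq> g" using hr Hs pp unfolding g_def b_def by auto
    have u1: "used n z (lo (arr ?h)) ?h" using A2[of ?h] hr hs by simp
    have u2: "used n z ?h (lo (arr ?h) - 1)" using A5[of ?h] A5a[of ?h] hr hs by simp
    have ne: "\<not> used n z (i - 1 - \<epsilon> i) (i + \<epsilon> i)" using E that by blast
    show ?thesis
    proof (intro conjI notI)
      assume "sg ?h = 2 * i - 1"
      then have "lo (arr ?h) = i - 1 - \<epsilon> i" unfolding sg_def by simp
      then show False using u1 ne by simp
    next
      assume "sg ?h = 2 * i"
      then have "lo (arr ?h) - 1 = i - 1 - \<epsilon> i" unfolding sg_def by simp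
      then show False using u2 ne used_sym by metis
    qed
  qed
  have C2: "Hs = b - 1 \<Longrightarrow> Suc (arr (b - 1)) < n \<and> hi (Suc (arr (b - 1))) = b - 1 \<and> lo (arr (b - 1)) \<ge> b - int n + 2"
  proof -
    assume hsb: "Hs = b - 1"
    then have f: "hi (n - 1) = b - 1" "z (n - 1) = lo (n - 1)" using fin unfolding Hs_def b_def by (auto split: if_splits)
    have sz1: "hi (n - 1) - lo (n - 1) = int (n - 1)" using stair_size[OF st, of "n - 1"] n5 by simp
    have s1: "Suc (n - 2) < n" "Suc (n - 2) = n - 1" using n5 by auto
    have ne1: "z (n - 1) \<noteq> hi (n - 1)" using f sz1 n5 by auto
    have l1: "lo (n - 1) = lo (n - 2) - 1" "hi (n - 2) = hi (n - 1)"
      using stair_step[OF st s1(1)] s1(2) ne1 by auto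
    have "z (n - 2) \<noteq> hi (n - 2)"
    proof
      assume "z (n - 2) = hi (n - 2)"
      then have "used n z (b - 1) (lo (n - 1))" using usedI[OF s1(1)] s1(2) f l1 by simp
      moreover have "lo (n - 1) mod int n = b mod int n"
      proof -
        have "lo (n - 1) = b - int n" using sz1 f n5 by simp
        then show ?thesis by simp
      qed
      ultimately have "used n z (b - 1) (b - 1 + 1)" using used_mod[of "b - 1" n "b - 1" "lo (n - 1)" b] by simp
      moreover have "a \<le> b - 1" "b - 1 < b" "b - 1 \<noteq> g" using pp unfolding a_def b_def g_def by auto
      ultimately show False using P by blast
    qed
    then have zl: "z (n - 2) = lo (n - 2)" using stair_z[OF st, of "n - 2"] n5 by auto
    have s2: "Suc (n - 3) < n" "Suc (n - 3) = n - 2" using n5 by auto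
    have sz2: "hi (n - 2) - lo (n - 2) = int (n - 2)" using stair_size[OF st, of "n - 2"] n5 by simp
    have ne2: "z (n - 2) \<noteq> hi (n - 2)" using zl sz2 n5 by auto
    have l2: "lo (n - 2) = lo (n - 3) - 1" "hi (n - 3) = hi (n - 2)"
      using stair_step[OF st s2(1)] s2(2) ne2 by auto
    have h3: "hi (n - 3) = b - 1" using l1 l2 f by simp
    have ab: "arr (b - 1) \<le> n - 3" unfolding arr_def using h3 by (auto intro: Least_le)
    have a1: "hi (arr (b - 1)) = b - 1" using A1[OF zlt hle, of "b - 1"] hsb pp unfolding a_def b_def by auto
    have m1: "hi (Suc (arr (b - 1))) \<le> hi (n - 2)" using stair_mono[OF st, of "Suc (arr (b - 1))" "n - 2"] ab n5 by simp
    have m2: "hi (arr (b - 1)) \<le> hi (Suc (arr (b - 1)))" using stair_mono[OF st, of "arr (b - 1)" "Suc (arr (b - 1))"] ab n5 by simp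
    have m3: "lo (n - 3) \<le> lo (arr (b - 1))" using stair_mono[OF st ab] n5 by simp
    have "lo (n - 1) = b - int n" using sz1 f n5 by simp
    moreover have "Suc (arr (b - 1)) < n" using ab n5 by linarith
    ultimately show ?thesis using m1 m2 a1 l1 l2 f m3 by simp
  qed
  have OX: "sg (int m - j - \<xi> j) \<noteq> 2 - 2 * j \<and> sg (int m - j - \<xi> j) \<noteq> 3 - 2 * j" if "1 \<le> j" "j \<le> \<delta>" for j
  proof -
    let ?h = "int m - j - \<xi> j"
    have hr: "g + 2 \<le> ?h" "?h \<le> b - 1" using xil[OF that] pp unfolding g_def b_def by auto
    have hs: "a + 1 \<le> ?h" "?h \<le> Hs" "?h \<noteq> g + 1" "?h \<noteq> g" using hr Hs pp unfolding a_def g_def by auto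
    have u1: "used n z (lo (arr ?h)) ?h" using A2[of ?h] hs by simp
    have u2: "used n z ?h (lo (arr ?h) - 1)"
    proof (cases "?h < Hs")
      case True then show ?thesis using A5[of ?h] A5a[of ?h] hs by simp
    next
      case False
      then have "Hs = b - 1" "?h = b - 1" using hs hr Hs by auto
      then show ?thesis using A5[of ?h] C2 hs by simp
    qed
    have ne: "\<not> used n z (int m - j - \<xi> j) (int m - j + 1 + \<xi> j)" using X that by blast
    have md: "(c - int n) mod int n = c mod int n" for c by simp
    show ?thesis
    proof (intro conjI notI)
      assume "sg ?h = 2 - 2 * j"
      then have e: "lo (arr ?h) = (int m - j + 1 + \<xi> j) + (-1) * int n" unfolding sg_def using nn by linarith
      have "lo (arr ?h) mod int n = (int m - j + 1 + \<xi> j) mod int n" unfolding e by (rule mod_mult_self1)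
      then have "used n z ?h (int m - j + 1 + \<xi> j)" using u1 used_sym used_mod by metis
      then show False using ne by simp
    next
      assume "sg ?h = 3 - 2 * j"
      then have e: "lo (arr ?h) - 1 = (int m - j + 1 + \<xi> j) + (-1) * int n" unfolding sg_def using nn by linarith
      have "(lo (arr ?h) - 1) mod int n = (int m - j + 1 + \<xi> j) mod int n" unfolding e by (rule mod_mult_self1)
      then have "used n z ?h (int m - j + 1 + \<xi> j)" using u2 used_mod by metis
      then show False using ne by simp
    qed
  qed
  have Echain: "sg (\<alpha> - int k + \<epsilon> (\<alpha> - int k)) \<le> 2 * (\<alpha> - int k) - 2" if "int k < \<alpha>" for k
    using that
  proof (induction k)
    case 0
    have r: "a + 1 \<le> \<alpha> + \<epsilon> \<alpha>" "\<alpha> + \<epsilon> \<alpha> \<le> g - 1" using epsl[of \<alpha>] 0 unfolding a_def g_def by auto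
    have "sg (\<alpha> + \<epsilon> \<alpha>) \<le> sg (a + 1)" using SM'[of "a + 1" "\<alpha> + \<epsilon> \<alpha>"] r Hs pp unfolding g_def b_def by simp
    then show ?case using base OE[of \<alpha>] 0 unfolding a_def by simp
  next
    case (Suc k)
    let ?i = "\<alpha> - int (Suc k)"
    have i1: "1 \<le> ?i" "?i < \<alpha>" using Suc.prems by auto
    have r: "a + 1 \<le> ?i + 1 + \<epsilon> (?i + 1)" "?i + 1 + \<epsilon> (?i + 1) \<le> ?i + \<epsilon> ?i" "?i + \<epsilon> ?i \<le> g - 1"
      using epsl[of "?i + 1"] epsl[of ?i] edec[rule_format, of ?i] i1 unfolding a_def g_def by auto
    have "sg (?i + \<epsilon> ?i) \<le> sg (?i + 1 + \<epsilon> (?i + 1))" using SM'[OF r(1) r(2)] r Hs pp unfolding g_def b_def by simp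
    moreover have "?i + 1 = \<alpha> - int k" by simp
    ultimately have "sg (?i + \<epsilon> ?i) \<le> 2 * (?i + 1) - 2" using Suc.IH Suc.prems by simp
    then show ?case using OE[of ?i] i1 by auto
  qed
  have sgg: "sg g \<le> 0"
  proof (cases "\<alpha> = 0")
    case True
    have "sg g \<le> sg (a + 1)" using SM'[of "a + 1" g] Hs pp unfolding g_def a_def b_def by simp
    then show ?thesis using base True unfolding a_def by simp
  next
    case False
    then have k: "int (nat (\<alpha> - 1)) < \<alpha>" "\<alpha> - int (nat (\<alpha> - 1)) = 1" using pp by auto
    have "sg (1 + \<epsilon> 1) \<le> 0" using Echain[OF k(1)] k(2) by simp
    moreover have "a + 1 \<le> 1 + \<epsilon> 1" "1 + \<epsilon> 1 \<le> g" using epsl[of 1] False pp unfolding a_def g_def by auto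
    ultimately show ?thesis using SM'[of "1 + \<epsilon> 1" g] Hs pp unfolding g_def b_def by simp
  qed
  have Xchain: "sg (int m - (int k + 1) - \<xi> (int k + 1)) \<le> 1 - 2 * (int k + 1)" if "int k + 1 \<le> \<delta>" for k
    using that
  proof (induction k)
    case 0
    have r: "g + 1 \<le> int m - 1 - \<xi> 1" "int m - 1 - \<xi> 1 \<le> b - 1" using xil[of 1] 0 pp unfolding g_def b_def by auto
    have "sg (int m - 1 - \<xi> 1) \<le> sg (g + 1)" using SM'[of "g + 1" "int m - 1 - \<xi> 1"] r Hs pp unfolding g_def a_def by simp
    then show ?case using gap sgg OX[of 1] 0 by simp
  next
    case (Suc k)
    let ?j = "int k + 1"
    have j1: "1 \<le> ?j" "?j + 1 \<le> \<delta>" using Suc.prems by auto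
    have r: "g + 1 \<le> int m - ?j - \<xi> ?j" "int m - ?j - \<xi> ?j \<le> int m - (?j + 1) - \<xi> (?j + 1)"
        "int m - (?j + 1) - \<xi> (?j + 1) \<le> b - 1"
      using xil[of "?j"] xil[of "?j + 1"] xdec[rule_format, of ?j] j1 pp unfolding g_def b_def by auto
    have "sg (int m - (?j + 1) - \<xi> (?j + 1)) \<le> sg (int m - ?j - \<xi> ?j)"
      using SM'[of "int m - ?j - \<xi> ?j" "int m - (?j + 1) - \<xi> (?j + 1)"] r Hs pp unfolding g_def a_def by simp
    then have "sg (int m - (?j + 1) - \<xi> (?j + 1)) \<le> 1 - 2 * ?j" using Suc.IH j1 by simp
    moreover have "int (Suc k) + 1 = ?j + 1" by simp
    ultimately show ?case using OX[of "?j + 1"] j1 by auto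
  qed
  have upper: "sg Hs \<le> 1 - 2 * \<delta>"
  proof (cases "\<delta> = 0")
    case True
    have "sg Hs \<le> sg (g + 1)" using SM'[of "g + 1" Hs] Hs pp unfolding g_def a_def b_def by simp
    then show ?thesis using gap sgg True by simp
  next
    case False
    then have k: "int (nat (\<delta> - 1)) + 1 \<le> \<delta>" "int (nat (\<delta> - 1)) + 1 = \<delta>" using pp by auto
    have "sg (int m - \<delta> - \<xi> \<delta>) \<le> 1 - 2 * \<delta>" using Xchain[OF k(1)] k(2) by simp
    moreover have "g + 1 \<le> int m - \<delta> - \<xi> \<delta>" "int m - \<delta> - \<xi> \<delta> \<le> b - 1" using xil[of \<delta>] False pp unfolding g_def b_def by auto
    ultimately show ?thesis using SM'[of "int m - \<delta> - \<xi> \<delta>" Hs] Hs pp unfolding g_def a_def by simp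
  qed
  have lower: "sg Hs \<ge> 2 - 2 * \<delta>"
  proof (cases "Hs = b")
    case True
    have "arr b < n" "hi (arr b) = b" using A1[OF zlt hle, of b] True pp unfolding a_def b_def by auto
    moreover have "hi (arr b) - lo (arr b) = int (arr b)" using stair_size[OF st, of "arr b"] calculation by blast
    ultimately show ?thesis unfolding sg_def using True nn unfolding b_def by simp
  next
    case False
    then have "Hs = b - 1" using Hs by simp
    then show ?thesis using C2 nn unfolding sg_def b_def by simp
  qed
  show False using upper lower by simp
qed


definition AV :: "nat \<Rightarrow> nat \<Rightarrow> int \<Rightarrow> int \<Rightarrow> int \<Rightarrow> int \<Rightarrow> int \<Rightarrow> (int \<Rightarrow> int) \<Rightarrow> (int \<Rightarrow> int) \<Rightarrow> (nat \<Rightarrow> int) \<Rightarrow> bool" where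
  "AV n m \<alpha> \<beta> \<gamma> \<delta> \<eta> \<epsilon> \<xi> z \<longleftrightarrow>
     (\<forall>x. \<alpha> \<le> x \<and> x < \<alpha> + \<beta> \<longrightarrow> \<not> used n z x (x + 1)) \<and>
     (\<forall>x. \<alpha> + \<beta> + 1 \<le> x \<and> x < int m - \<delta> \<longrightarrow> \<not> used n z x (x + 1)) \<and>
     \<not> used n z (\<alpha> + \<beta> - \<eta>) (\<alpha> + \<beta> + 1 + \<eta>) \<and>
     (\<forall>i. 1 \<le> i \<and> i \<le> \<alpha> \<longrightarrow> \<not> used n z (i - 1 - \<epsilon> i) (i + \<epsilon> i)) \<and>
     (\<forall>j. 1 \<le> j \<and> j \<le> \<delta> \<longrightarrow> \<not> used n z (int m - j - \<xi> j) (int m - j + 1 + \<xi> j))"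

lemma params_sym: "classB_params m \<alpha> \<beta> \<gamma> \<delta> \<eta> \<epsilon> \<xi> \<Longrightarrow> classB_params m \<delta> \<gamma> \<beta> \<alpha> \<eta> \<xi> \<epsilon>"
  unfolding classB_params_def using min.commute[of "\<beta> - 1" "\<gamma> - 1"] by auto

lemma used_link:
  assumes len: "length p = n" and lk: "\<forall>t<n. p ! t = vx n (z t + k)" and u: "used n z x y"
  shows "seg n k x y \<in> path_edges p"
proof -
  obtain t where t: "Suc t < n" "{z t mod int n, z (Suc t) mod int n} = {x mod int n, y mod int n}"
    using u unfolding used_def by blast
  have n0: "n > 0" using t by simp
  have vxm: "vx n (w + k) = vx n (w mod int n + k)" for w
    using vx_eq_iff[OF n0] by (simp add: mod_add_left_eq)
  have "{p ! t, p ! Suc t} = {vx n (z t + k), vx n (z (Suc t) + k)}" using lk t by simp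
  also have "\<dots> = (\<lambda>r. vx n (r + k)) ` {z t mod int n, z (Suc t) mod int n}"
    by (simp add: vxm[of "z t"] vxm[of "z (Suc t)"])
  also have "\<dots> = (\<lambda>r. vx n (r + k)) ` {x mod int n, y mod int n}" using t(2) by (rule arg_cong)
  also have "\<dots> = seg n k x y" unfolding seg_def by (simp add: vxm[of x] vxm[of y])
  finally show ?thesis using path_edgesI[of t p] t len by simp
qed

lemma AV_of:
  assumes B: "B = classB_set m k \<alpha> \<beta> \<gamma> \<delta> \<eta> \<epsilon> \<xi>" and dis: "B \<inter> path_edges p = {}"
    and n: "n = 2 * m - 1" and len: "length p = n" and lk: "\<forall>t<n. p ! t = vx n (z t + k)"
  shows "AV n m \<alpha> \<beta> \<gamma> \<delta> \<eta> \<epsilon> \<xi> z"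
proof -
  have no: "\<not> used n z x y" if "seg n k x y \<in> B" for x y
    using used_link[OF len lk, of x y] that dis by blast
  show ?thesis unfolding AV_def
  proof (intro conjI allI impI)
    fix x assume "\<alpha> \<le> x \<and> x < \<alpha> + \<beta>"
    then have "seg n k x (x + 1) \<in> B" unfolding B classB_set_def Let_def n by blast
    then show "\<not> used n z x (x + 1)" using no by blast
  next
    fix x assume "\<alpha> + \<beta> + 1 \<le> x \<and> x < int m - \<delta>"
    then have "seg n k x (x + 1) \<in> B" unfolding B classB_set_def Let_def n by blast
    then show "\<not> used n z x (x + 1)" using no by blast
  next
    have "seg n k (\<alpha> + \<beta> - \<eta>) (\<alpha> + \<beta> + 1 + \<eta>) \<in> B" unfolding B classB_set_def Let_def n by blast
    then show "\<not> used n z (\<alpha> + \<beta> - \<eta>) (\<alpha> + \<beta> + 1 + \<eta>)" using no by blast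
  next
    fix i assume "1 \<le> i \<and> i \<le> \<alpha>"
    then have "seg n k (i - 1 - \<epsilon> i) (i + \<epsilon> i) \<in> B" unfolding B classB_set_def Let_def n by blast
    then show "\<not> used n z (i - 1 - \<epsilon> i) (i + \<epsilon> i)" using no by blast
  next
    fix j assume "1 \<le> j \<and> j \<le> \<delta>"
    then have "seg n k (int m - j - \<xi> j) (int m - j + 1 + \<xi> j) \<in> B" unfolding B classB_set_def Let_def n by blast
    then show "\<not> used n z (int m - j - \<xi> j) (int m - j + 1 + \<xi> j)" using no by blast
  qed
qed

lemma AV_reflect:
  assumes av: "AV n m \<alpha> \<beta> \<gamma> \<delta> \<eta> \<epsilon> \<xi> z" and par: "classB_params m \<alpha> \<beta> \<gamma> \<delta> \<eta> \<epsilon> \<xi>"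
    and n: "n = 2 * m - 1"
  shows "AV n m \<delta> \<gamma> \<beta> \<alpha> \<eta> \<xi> \<epsilon> (\<lambda>t. (int m - int n) - z t)"
proof -
  have pp: "\<beta> + \<gamma> = int m - \<alpha> - \<delta> - 1" using par unfolding classB_params_def by auto
  have R: "used n (\<lambda>t. (int m - int n) - z t) u v = used n z (int m - u) (int m - v)" for u v
  proof -
    have "used n (\<lambda>t. (int m - int n) - z t) u v = used n z (int m - int n - u) (int m - int n - v)"
      by (rule used_reflect)
    also have "\<dots> = used n z (int m - u) (int m - v)"
    proof (rule used_mod)
      have "int m - int n - u = (int m - u) + (-1) * int n" by simp
      then show "(int m - int n - u) mod int n = (int m - u) mod int n" by (metis mod_mult_self1)
      have "int m - int n - v = (int m - v) + (-1) * int n" by simp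
      then show "(int m - int n - v) mod int n = (int m - v) mod int n" by (metis mod_mult_self1)
    qed
    finally show ?thesis .
  qed
  have a1: "\<forall>x. \<alpha> \<le> x \<and> x < \<alpha> + \<beta> \<longrightarrow> \<not> used n z x (x + 1)"
    and a2: "\<forall>x. \<alpha> + \<beta> + 1 \<le> x \<and> x < int m - \<delta> \<longrightarrow> \<not> used n z x (x + 1)"
    and a3: "\<not> used n z (\<alpha> + \<beta> - \<eta>) (\<alpha> + \<beta> + 1 + \<eta>)"
    and a4: "\<forall>i. 1 \<le> i \<and> i \<le> \<alpha> \<longrightarrow> \<not> used n z (i - 1 - \<epsilon> i) (i + \<epsilon> i)"
    and a5: "\<forall>j. 1 \<le> j \<and> j \<le> \<delta> \<longrightarrow> \<not> used n z (int m - j - \<xi> j) (int m - j + 1 + \<xi> j)"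
    using av unfolding AV_def by auto
  show ?thesis unfolding AV_def R
  proof (intro conjI allI impI)
    fix x assume x: "\<delta> \<le> x \<and> x < \<delta> + \<gamma>"
    have "\<not> used n z (int m - x - 1) (int m - x - 1 + 1)" using a2[rule_format, of "int m - x - 1"] x pp by auto
    then show "\<not> used n z (int m - x) (int m - (x + 1))" using used_sym by (simp add: algebra_simps)
  next
    fix x assume x: "\<delta> + \<gamma> + 1 \<le> x \<and> x < int m - \<alpha>"
    have "\<not> used n z (int m - x - 1) (int m - x - 1 + 1)" using a1[rule_format, of "int m - x - 1"] x pp by auto
    then show "\<not> used n z (int m - x) (int m - (x + 1))" using used_sym by (simp add: algebra_simps)
  next
    have e1: "int m - (\<delta> + \<gamma> - \<eta>) = \<alpha> + \<beta> + 1 + \<eta>" "int m - (\<delta> + \<gamma> + 1 + \<eta>) = \<alpha> + \<beta> - \<eta>" using pp by auto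
    show "\<not> used n z (int m - (\<delta> + \<gamma> - \<eta>)) (int m - (\<delta> + \<gamma> + 1 + \<eta>))"
      unfolding e1 using a3 used_sym by metis
  next
    fix i assume i: "1 \<le> i \<and> i \<le> \<delta>"
    have e1: "int m - (i - 1 - \<xi> i) = int m - i + 1 + \<xi> i" "int m - (i + \<xi> i) = int m - i - \<xi> i" by auto
    show "\<not> used n z (int m - (i - 1 - \<xi> i)) (int m - (i + \<xi> i))"
      unfolding e1 using a5 i used_sym by metis
  next
    fix j assume j: "1 \<le> j \<and> j \<le> \<alpha>"
    have e1: "int m - (int m - j - \<epsilon> j) = j + \<epsilon> j" "int m - (int m - j + 1 + \<epsilon> j) = j - 1 - \<epsilon> j" by auto
    show "\<not> used n z (int m - (int m - j - \<epsilon> j)) (int m - (int m - j + 1 + \<epsilon> j))"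
      unfolding e1 using a4 j used_sym by metis
  qed
qed

lemma AV_shift:
  assumes "AV n m \<alpha> \<beta> \<gamma> \<delta> \<eta> \<epsilon> \<xi> z"
  shows "AV n m \<alpha> \<beta> \<gamma> \<delta> \<eta> \<epsilon> \<xi> (\<lambda>t. z t + q * int n)"
proof -
  have R: "used n (\<lambda>t. z t + q * int n) u v = used n z u v" for u v
  proof -
    have "used n (\<lambda>t. z t + q * int n) u v = used n z (u - q * int n) (v - q * int n)" by (rule used_shift)
    also have "\<dots> = used n z u v"
    proof (rule used_mod)
      have "u - q * int n = u + (- q) * int n" by simp
      then show "(u - q * int n) mod int n = u mod int n" by (metis mod_mult_self1)
      have "v - q * int n = v + (- q) * int n" by simp
      then show "(v - q * int n) mod int n = v mod int n" by (metis mod_mult_self1)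
    qed
    finally show ?thesis .
  qed
  show ?thesis using assms unfolding AV_def R .
qed

lemma normalize:
  assumes shp: "SHP n p" and n0: "n > 0"
  shows "\<exists>z lo hi. stair n z lo hi \<and> (\<forall>t<n. p ! t = vx n (z t + k)) \<and> c \<le> z 0 \<and> z 0 < c + int n"
proof -
  obtain z0 lo0 hi0 where st: "stair n z0 lo0 hi0" and lk: "\<forall>t<n. p ! t = vx n (z0 t)"
    using SHP_stair[OF shp n0] by blast
  define X where "X = z0 0 - k - c"
  define q where "q = - (X div int n)"
  define z where "z t = z0 t - k + q * int n" for t
  have st2: "stair n z (\<lambda>t. lo0 t + (q * int n - k)) (\<lambda>t. hi0 t + (q * int n - k))"
    using stair_shift[OF st, of "q * int n - k"] unfolding z_def by (simp add: algebra_simps)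
  have "z 0 = c + X mod int n" unfolding z_def q_def X_def
    using div_mult_mod_eq[of X "int n"] unfolding X_def by (simp add: algebra_simps)
  then have r: "c \<le> z 0" "z 0 < c + int n" using n0 by simp_all
  have "p ! t = vx n (z t + k)" if "t < n" for t
  proof -
    have "z t + k = z0 t + q * int n" unfolding z_def by simp
    then have "vx n (z t + k) = vx n (z0 t)" using vx_eq_iff[OF n0] by simp
    then show ?thesis using lk that by simp
  qed
  then show ?thesis using st2 r by blast
qed


lemma mod_uniq:
  assumes "c \<le> x" "x < c + int n" "c \<le> y" "y < c + int n" "x mod int n = y mod int n"
  shows "x = y"
proof -
  have n0: "n > 0" using assms by simp
  show ?thesis using vx_inj[OF assms(1-4)] vx_eq_iff[OF n0, of x y] assms(5) by simp
qed

lemma vxk_iff: "n > 0 \<Longrightarrow> (vx n (a + k) = vx n (b + k)) = (a mod int n = b mod int n)"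
  using vx_eq_iff[of n "a + k" "b + k"] mod_shift_iff[of a k "int n" "b + k"] by simp

lemma seg_eq: "n > 0 \<Longrightarrow> x mod int n = x' mod int n \<Longrightarrow> y mod int n = y' mod int n \<Longrightarrow> seg n k x y = seg n k x' y'"
  unfolding seg_def using vxk_iff by metis

lemma caseA_list:
  assumes par: "classB_params m \<alpha> \<beta> \<gamma> \<delta> \<eta> \<epsilon> \<xi>" and n: "n = 2 * m - 1"
    and shp: "SHP n p" and B: "B = classB_set m k \<alpha> \<beta> \<gamma> \<delta> \<eta> \<epsilon> \<xi>"
    and dis: "B \<inter> path_edges p = {}"
    and first: "{p ! 0, p ! 1} = seg n k (\<alpha> + \<beta>) (\<alpha> + \<beta> + 1)"
  shows False
proof -
  define g where "g = \<alpha> + \<beta>"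
  have pp: "\<alpha> + \<delta> \<le> int m - 5" "0 \<le> \<alpha>" "0 \<le> \<delta>" using par unfolding classB_params_def by auto
  have nn: "int n = 2 * int m - 1" using n pp by simp
  have n9: "n \<ge> 9" using nn pp by linarith
  have n0: "n > 0" using n9 by simp
  obtain z lo hi where st: "stair n z lo hi" and lk: "\<forall>t<n. p ! t = vx n (z t + k)"
      and r: "g \<le> z 0" "z 0 < g + int n"
    using normalize[OF shp n0, of k g] by blast
  have len: "length p = n" using SHP_length[OF shp] .
  have av: "AV n m \<alpha> \<beta> \<gamma> \<delta> \<eta> \<epsilon> \<xi> z" using AV_of[OF B dis n len lk] .
  have dist: "p ! 0 \<noteq> p ! 1" using shp len n9 unfolding SHP_def by (simp add: nth_eq_iff_index_eq)
  have p0: "p ! 0 = vx n (z 0 + k)" and p1: "p ! 1 = vx n (z 1 + k)" using lk n9 by auto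
  have z1: "z 1 = z 0 - 1 \<or> z 1 = z 0 + 1" using stair_step[OF st, of 0] stair_0[OF st] n9 by auto
  have sg: "seg n k g (g + 1) = {vx n (g + k), vx n (g + 1 + k)}" unfolding seg_def by simp
  have first': "{p ! 0, p ! 1} = {vx n (g + k), vx n (g + 1 + k)}" using first sg unfolding g_def by simp
  have two: "(x + 2) mod int n \<noteq> x mod int n" for x
  proof
    assume "(x + 2) mod int n = x mod int n"
    then have "int n dvd 2" by (metis add_diff_cancel_left' mod_eq_dvd_iff)
    then show False using n9 by (simp add: zdvd_not_zless)
  qed
  have start: "(z 0 = g \<and> z 1 = g + 1) \<or> (z 0 = g + 1 \<and> z 1 = g)"
  proof (cases "p ! 0 = vx n (g + k)")
    case True
    then have "z 0 mod int n = g mod int n" using p0 vxk_iff[OF n0] by simp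
    then have e0: "z 0 = g" using mod_uniq[of g "z 0" n g] r n9 by simp
    have "p ! 1 = vx n (g + 1 + k)" using first' dist True by (auto simp: doubleton_eq_iff)
    then have m1: "z 1 mod int n = (g + 1) mod int n" using p1 vxk_iff[OF n0] by simp
    have "z 1 = g + 1"
    proof (rule ccontr)
      assume "z 1 \<noteq> g + 1"
      then have "z 1 = g - 1" using z1 e0 by auto
      have t2: "((g - 1) + 2) mod int n \<noteq> (g - 1) mod int n" by (rule two)
      have e2: "(g - 1) + 2 = g + 1" by simp
      have "(g + 1) mod int n \<noteq> (g - 1) mod int n" using t2[unfolded e2] .
      then show False using m1 \<open>z 1 = g - 1\<close> by simp
    qed
    then show ?thesis using e0 by simp
  next
    case False
    moreover have "p ! 0 \<in> {vx n (g + k), vx n (g + 1 + k)}" using first' by blast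
    ultimately have "p ! 0 = vx n (g + 1 + k)" by blast
    then have "z 0 mod int n = (g + 1) mod int n" using p0 vxk_iff[OF n0] by simp
    then have e0: "z 0 = g + 1" using mod_uniq[of g "z 0" n "g + 1"] r n9 by simp
    have "p ! 1 = vx n (g + k)" using first' dist False by (auto simp: doubleton_eq_iff)
    then have m1: "z 1 mod int n = g mod int n" using p1 vxk_iff[OF n0] by simp
    have "z 1 = g"
    proof (rule ccontr)
      assume "z 1 \<noteq> g"
      then have "z 1 = g + 2" using z1 e0 by auto
      then show False using m1 two[of g] by simp
    qed
    then show ?thesis using e0 by simp
  qed
  show False using caseA[OF par n st] start av unfolding AV_def g_def by blast
qed

lemma blocks:
  assumes par: "classB_params m \<alpha> \<beta> \<gamma> \<delta> \<eta> \<epsilon> \<xi>" and n: "n = 2 * m - 1"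
    and B: "B = classB_set m k \<alpha> \<beta> \<gamma> \<delta> \<eta> \<epsilon> \<xi>" and shp: "SHP n p"
  shows "B \<inter> path_edges p \<noteq> {}"
proof
  assume dis: "B \<inter> path_edges p = {}"
  define a where "a = \<alpha>"
  define g where "g = \<alpha> + \<beta>"
  define b where "b = int m - \<delta>"
  have pp: "\<alpha> + \<delta> \<le> int m - 5" "0 \<le> \<alpha>" "0 \<le> \<delta>" "2 \<le> \<beta>" "2 \<le> \<gamma>" "\<beta> + \<gamma> = int m - \<alpha> - \<delta> - 1"
    using par unfolding classB_params_def by auto
  have nn: "int n = 2 * int m - 1" using n pp by simp
  have n9: "n \<ge> 9" using nn pp by linarith
  have n0: "n > 0" using n9 by simp
  have len: "length p = n" using SHP_length[OF shp] .
  obtain z lo hi where st: "stair n z lo hi" and lk: "\<forall>t<n. p ! t = vx n (z t + k)"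
      and r: "b - int n \<le> z 0" "z 0 < b - int n + int n"
    using normalize[OF shp n0, of k "b - int n"] by blast
  have av: "AV n m \<alpha> \<beta> \<gamma> \<delta> \<eta> \<epsilon> \<xi> z" using AV_of[OF B dis n len lk] .
  have P1: "\<forall>x. \<alpha> \<le> x \<and> x < \<alpha> + \<beta> \<longrightarrow> \<not> used n z x (x + 1)"
    and P2: "\<forall>x. \<alpha> + \<beta> + 1 \<le> x \<and> x < int m - \<delta> \<longrightarrow> \<not> used n z x (x + 1)"
    and E: "\<forall>i. 1 \<le> i \<and> i \<le> \<alpha> \<longrightarrow> \<not> used n z (i - 1 - \<epsilon> i) (i + \<epsilon> i)"
    and X: "\<forall>j. 1 \<le> j \<and> j \<le> \<delta> \<longrightarrow> \<not> used n z (int m - j - \<xi> j) (int m - j + 1 + \<xi> j)"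
    and ET: "\<not> used n z (\<alpha> + \<beta> - \<eta>) (\<alpha> + \<beta> + 1 + \<eta>)"
    using av unfolding AV_def by auto
  have P: "\<not> used n z x (x + 1)" if "a \<le> x" "x < b" "x \<noteq> g" for x
    using P1 P2 that unfolding a_def b_def g_def by (cases "x < \<alpha> + \<beta>") auto
  have revA: False if "z (n - 2) mod int n = g mod int n \<and> z (n - 1) mod int n = (g + 1) mod int n \<or>
                        z (n - 2) mod int n = (g + 1) mod int n \<and> z (n - 1) mod int n = g mod int n"
  proof -
    have e: "{p ! (n - 2), p ! (n - 1)} = seg n k (z (n - 2)) (z (n - 1))" using lk n9 unfolding seg_def by simp
    have "seg n k (z (n - 2)) (z (n - 1)) = seg n k g (g + 1)"
      using that seg_eq[OF n0, of "z (n - 2)" g "z (n - 1)" "g + 1" k]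
        seg_eq[OF n0, of "z (n - 2)" "g + 1" "z (n - 1)" g k] unfolding seg_def by (auto simp: insert_commute)
    moreover have "rev p ! 0 = p ! (n - 1)" "rev p ! 1 = p ! (n - 2)" using len n9 by (simp_all add: rev_nth numeral_2_eq_2)
    ultimately have "{rev p ! 0, rev p ! 1} = seg n k (\<alpha> + \<beta>) (\<alpha> + \<beta> + 1)"
      using e unfolding g_def by (simp add: insert_commute)
    moreover have "B \<inter> path_edges (rev p) = {}" using dis path_edges_rev by simp
    ultimately show False using caseA_list[OF par n rev_SHP[OF shp] B] by blast
  qed
  define C where "C = int m - int n"
  have stR: "stair n (\<lambda>t. C - z t) (\<lambda>t. C - hi t) (\<lambda>t. C - lo t)" using stair_reflect[OF st] .
  have avR: "AV n m \<delta> \<gamma> \<beta> \<alpha> \<eta> \<xi> \<epsilon> (\<lambda>t. C - z t)" using AV_reflect[OF av par n] unfolding C_def .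
  have reflect_sweep: False if "C - z 0 \<le> \<delta>"
     "C - lo (n - 1) \<ge> int m - \<alpha> \<or> (C - lo (n - 1) = int m - \<alpha> - 1 \<and> C - z (n - 1) = C - hi (n - 1))"
    using sweep[OF params_sym[OF par] n stR] that avR unfolding AV_def by blast
  have z0R: "C - z 0 \<le> \<delta>" using r unfolding C_def b_def by simp
  have sz: "hi (n - 1) - lo (n - 1) = int n - 1" using stair_size[OF st, of "n - 1"] n9 by simp
  have u01: "Suc 0 < n" using n9 by simp
  have un: "Suc (n - 2) < n" "Suc (n - 2) = n - 1" using n9 by auto
  show False
  proof (cases "a + 1 \<le> z 0")
    case True
    have zb: "z 0 \<le> b - 1" using r by simp
    have z1: "z 1 = z 0 - 1 \<or> z 1 = z 0 + 1" using stair_step[OF st, of 0] stair_0[OF st] n9 by auto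
    have u: "used n z (z 0) (z 1)" using usedI[OF u01] by simp
    show False
    proof (cases "z 1 = z 0 + 1")
      case True
      show False
      proof (cases "z 0 = g")
        case True
        then have "z 0 = \<alpha> + \<beta> \<and> z 1 = \<alpha> + \<beta> + 1" using \<open>z 1 = z 0 + 1\<close> unfolding g_def by simp
        then show False using caseA[OF par n st _ P1 P2 ET] by blast
      next
        case False
        then show False using P[of "z 0"] u \<open>z 1 = z 0 + 1\<close> \<open>a + 1 \<le> z 0\<close> zb by simp
      qed
    next
      case False
      then have z1': "z 1 = z 0 - 1" using z1 by simp
      have u': "used n z (z 0 - 1) (z 0 - 1 + 1)" using u z1' used_sym by simp
      show False
      proof (cases "z 0 - 1 = g")
        case True
        then have "z 0 = \<alpha> + \<beta> + 1 \<and> z 1 = \<alpha> + \<beta>" using z1' unfolding g_def by simp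
        then show False using caseA[OF par n st _ P1 P2 ET] by blast
      next
        case False
        then show False using P[of "z 0 - 1"] u' \<open>a + 1 \<le> z 0\<close> zb by simp
      qed
    qed
  next
    case False
    then have z0: "z 0 \<le> \<alpha>" unfolding a_def by simp
    show False
    proof (cases "hi (n - 1) \<ge> b")
      case True
      then show False using sweep[OF par n st z0 P1 P2 E X] unfolding b_def by blast
    next
      case hb: False
      show False
      proof (cases "lo (n - 1) \<le> a - int n")
        case True
        then show False using reflect_sweep[OF z0R] unfolding C_def a_def by simp
      next
        case la: False
        have Hr: "a \<le> hi (n - 1)" "hi (n - 1) \<le> b - 1" using hb la sz by auto
        have mL: "lo (n - 1) mod int n = (hi (n - 1) + 1) mod int n"
        proof -
          have "lo (n - 1) = (hi (n - 1) + 1) + (-1) * int n" using sz by simp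
          then show ?thesis by (metis mod_mult_self1)
        qed
        have ne: "lo (n - 1) \<noteq> hi (n - 1)" using sz n9 by simp
        show False
        proof (cases "z (n - 1) = hi (n - 1)")
          case zR: True
          have stp: "hi (n - 2) = hi (n - 1) - 1" "lo (n - 2) = lo (n - 1)"
            using stair_step[OF st un(1)] un(2) zR ne by auto
          have uu: "used n z (z (n - 2)) (hi (n - 1))" using usedI[OF un(1)] un(2) zR by simp
          have zz: "z (n - 2) = lo (n - 2) \<or> z (n - 2) = hi (n - 2)" using stair_z[OF st, of "n - 2"] n9 by simp
          show False
          proof (cases "z (n - 2) = hi (n - 2)")
            case True
            show False
            proof (cases "hi (n - 1) = a")
              case True
              have "C - lo (n - 1) = int m - \<alpha> - 1" using sz True unfolding C_def a_def by simp
              then show False using reflect_sweep[OF z0R] zR by simp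
            next
              case False
              have uu': "used n z (hi (n - 1) - 1) (hi (n - 1) - 1 + 1)" using uu \<open>z (n - 2) = hi (n - 2)\<close> stp by simp
              show False
              proof (cases "hi (n - 1) - 1 = g")
                case True
                then have "z (n - 2) = g" "z (n - 1) = g + 1" using \<open>z (n - 2) = hi (n - 2)\<close> stp zR by simp_all
                then show False using revA by simp
              next
                case False
                then show False using P[of "hi (n - 1) - 1"] uu' Hr \<open>hi (n - 1) \<noteq> a\<close> by simp
              qed
            qed
          next
            case False
            then have z2: "z (n - 2) = lo (n - 1)" using zz stp by simp
            have uu': "used n z (hi (n - 1)) (hi (n - 1) + 1)"
              using uu z2 used_sym used_mod[OF mL refl, of z "hi (n - 1)"] by metis
            show False
            proof (cases "hi (n - 1) = g")
              case True
              then have "z (n - 2) mod int n = (g + 1) mod int n" "z (n - 1) mod int n = g mod int n"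
                using z2 mL zR by simp_all
              then show False using revA by simp
            next
              case False
              then show False using P[of "hi (n - 1)"] uu' Hr by simp
            qed
          qed
        next
          case zL: False
          then have zL': "z (n - 1) = lo (n - 1)" using stair_z[OF st, of "n - 1"] n9 by auto
          have stp: "lo (n - 2) = lo (n - 1) + 1" "hi (n - 2) = hi (n - 1)"
            using stair_step[OF st un(1)] un(2) zL by auto
          have uu: "used n z (z (n - 2)) (lo (n - 1))" using usedI[OF un(1)] un(2) zL' by simp
          have zz: "z (n - 2) = lo (n - 2) \<or> z (n - 2) = hi (n - 2)" using stair_z[OF st, of "n - 2"] n9 by simp
          show False
          proof (cases "z (n - 2) = hi (n - 2)")
            case True
            have uu': "used n z (hi (n - 1)) (hi (n - 1) + 1)"
              using uu True stp used_mod[OF refl mL, of z "hi (n - 1)"] by simp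
            show False
            proof (cases "hi (n - 1) = g")
              case True
              then have "z (n - 2) mod int n = g mod int n" "z (n - 1) mod int n = (g + 1) mod int n"
                using \<open>z (n - 2) = hi (n - 2)\<close> stp zL' mL by simp_all
              then show False using revA by simp
            next
              case False
              then show False using P[of "hi (n - 1)"] uu' Hr by simp
            qed
          next
            case False
            then have z2: "z (n - 2) = lo (n - 1) + 1" using zz stp by simp
            define L' where "L' = lo (n - 1) + int n"
            have L'r: "L' = hi (n - 1) + 1" using sz unfolding L'_def by simp
            show False
            proof (cases "L' = b")
              case True
              then have "hi (n - 1) = int m - \<delta> - 1" using L'r unfolding b_def by simp
              then show False using sweep[OF par n st z0 P1 P2 E X] zL' by blast
            next
              case False
              have m1: "(lo (n - 1) + 1) mod int n = (L' + 1) mod int n"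
              proof -
                have "lo (n - 1) + 1 = (L' + 1) + (-1) * int n" unfolding L'_def by simp
                then show ?thesis by (metis mod_mult_self1)
              qed
              have m2: "lo (n - 1) mod int n = L' mod int n"
              proof -
                have "lo (n - 1) = L' + (-1) * int n" unfolding L'_def by simp
                then show ?thesis by (metis mod_mult_self1)
              qed
              have "used n z (L' + 1) L'" using uu z2 used_mod[OF m1 m2] by simp
              then have uu': "used n z L' (L' + 1)" using used_sym by metis
              show False
              proof (cases "L' = g")
                case True
                then have "z (n - 2) mod int n = (g + 1) mod int n" "z (n - 1) mod int n = g mod int n"
                  using z2 zL' m1 m2 by simp_all
                then show False using revA by simp
              next
                case False
                then show False using P[of L'] uu' L'r Hr \<open>L' \<noteq> b\<close> by simp
              qed
            qed
          qed
        qed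
      qed
    qed
  qed
qed


lemma mod_nonneg_small: "0 \<le> a \<Longrightarrow> a < int n \<Longrightarrow> a mod int n = a" by simp
lemma mod_neg_small: "- int n \<le> a \<Longrightarrow> a < 0 \<Longrightarrow> a mod int n = a + int n"
proof -
  assume "- int n \<le> a" "a < 0"
  then have "(a + int n) mod int n = a + int n" by (intro mod_pos_pos_trivial) auto
  then show ?thesis using mod_add_self2[of a "int n"] by simp
qed

lemma nested_nc:
  assumes o: "u1 \<le> u2" "u2 < v2" "v2 \<le> v1" "v1 < u1 + int n"
  shows "\<not> crosses n {vx n u1, vx n v1} {vx n u2, vx n v2}"
    and "\<not> crosses n {vx n u2, vx n v2} {vx n u1, vx n v1}"
proof -
  have n0: "n > 0" using o by simp
  have I1: "cyc_between n (vx n u1) (vx n w) (vx n v1)" if "u1 < w" "w < v1" for w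
    unfolding cyc_vx[OF n0] using that o by (simp add: mod_nonneg_small)
  have I2: "\<not> cyc_between n (vx n v1) (vx n w) (vx n u1)" if "u1 < w" "w < v1" for w
  proof -
    have "(w - v1) mod int n = w - v1 + int n" using that o by (intro mod_neg_small) auto
    moreover have "(u1 - v1) mod int n = u1 - v1 + int n" using that o by (intro mod_neg_small) auto
    ultimately show ?thesis unfolding cyc_vx[OF n0] using that by simp
  qed
  have O1: "\<not> cyc_between n (vx n u2) (vx n w) (vx n v2)" if "w = u1 \<and> u1 < u2 \<or> w = v1 \<and> v2 < v1" for w
  proof -
    have e2: "(v2 - u2) mod int n = v2 - u2" using o by (simp add: mod_nonneg_small)
    show ?thesis using that
    proof
      assume a: "w = u1 \<and> u1 < u2"
      then have "(w - u2) mod int n = w - u2 + int n" using o by (intro mod_neg_small) auto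
      then show ?thesis unfolding cyc_vx[OF n0] e2 using a o by simp
    next
      assume a: "w = v1 \<and> v2 < v1"
      then have "(w - u2) mod int n = w - u2" using o by (intro mod_nonneg_small) auto
      then show ?thesis unfolding cyc_vx[OF n0] e2 using a o by simp
    qed
  qed
  have O2: "cyc_between n (vx n v2) (vx n w) (vx n u2)" if "w = u1 \<and> u1 < u2 \<or> w = v1 \<and> v2 < v1" for w
  proof -
    have e2: "(u2 - v2) mod int n = u2 - v2 + int n" using o by (intro mod_neg_small) auto
    show ?thesis using that
    proof
      assume a: "w = u1 \<and> u1 < u2"
      then have "(w - v2) mod int n = w - v2 + int n" using o by (intro mod_neg_small) auto
      then show ?thesis unfolding cyc_vx[OF n0] e2 using a o by simp
    next
      assume a: "w = v1 \<and> v2 < v1"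
      then have "(w - v2) mod int n = w - v2" using o by (intro mod_nonneg_small) auto
      then show ?thesis unfolding cyc_vx[OF n0] e2 using a o by simp
    qed
  qed
  have inj: "vx n x = vx n y \<Longrightarrow> u1 \<le> x \<Longrightarrow> x \<le> v1 \<Longrightarrow> u1 \<le> y \<Longrightarrow> y \<le> v1 \<Longrightarrow> x = y" for x y
    using vx_inj[of u1 x n y] o by simp
  show "\<not> crosses n {vx n u1, vx n v1} {vx n u2, vx n v2}"
  proof
    assume "crosses n {vx n u1, vx n v1} {vx n u2, vx n v2}"
    then obtain a b c d where ab: "{vx n u1, vx n v1} = {a, b}" and cd: "{vx n u2, vx n v2} = {c, d}"
      and ds: "distinct [a, b, c, d]" and cy: "cyc_between n a c b \<noteq> cyc_between n a d b"
      unfolding crosses_def by metis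
    have inner: "\<exists>w. x = vx n w \<and> u1 < w \<and> w < v1" if "x \<in> {c, d}" for x
    proof -
      have xx: "x \<noteq> vx n u1" "x \<noteq> vx n v1" using that ds ab by (auto simp: doubleton_eq_iff)
      have "x = vx n u2 \<or> x = vx n v2" using that cd by auto
      then show ?thesis
      proof
        assume "x = vx n u2"
        moreover have "u2 \<noteq> u1" using xx calculation by auto
        ultimately show ?thesis using o by auto
      next
        assume "x = vx n v2"
        moreover have "v2 \<noteq> v1" using xx calculation by auto
        ultimately show ?thesis using o by auto
      qed
    qed
    obtain wc where wc: "c = vx n wc" "u1 < wc" "wc < v1" using inner[of c] by auto
    obtain wd where wd: "d = vx n wd" "u1 < wd" "wd < v1" using inner[of d] by auto
    have "(a = vx n u1 \<and> b = vx n v1) \<or> (a = vx n v1 \<and> b = vx n u1)" using ab by (auto simp: doubleton_eq_iff)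
    then show False
    proof
      assume "a = vx n u1 \<and> b = vx n v1"
      then show False using cy I1[of wc] I1[of wd] wc wd by simp
    next
      assume "a = vx n v1 \<and> b = vx n u1"
      then show False using cy I2[of wc] I2[of wd] wc wd by simp
    qed
  qed
  show "\<not> crosses n {vx n u2, vx n v2} {vx n u1, vx n v1}"
  proof
    assume "crosses n {vx n u2, vx n v2} {vx n u1, vx n v1}"
    then obtain a b c d where ab: "{vx n u2, vx n v2} = {a, b}" and cd: "{vx n u1, vx n v1} = {c, d}"
      and ds: "distinct [a, b, c, d]" and cy: "cyc_between n a c b \<noteq> cyc_between n a d b"
      unfolding crosses_def by metis
    have outer: "\<exists>w. x = vx n w \<and> (w = u1 \<and> u1 < u2 \<or> w = v1 \<and> v2 < v1)" if "x \<in> {c, d}" for x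
    proof -
      have xx: "x \<noteq> vx n u2" "x \<noteq> vx n v2" using that ds ab by (auto simp: doubleton_eq_iff)
      have "x = vx n u1 \<or> x = vx n v1" using that cd by auto
      then show ?thesis
      proof
        assume "x = vx n u1"
        moreover have "u2 \<noteq> u1" using xx calculation by auto
        ultimately show ?thesis using o by auto
      next
        assume "x = vx n v1"
        moreover have "v2 \<noteq> v1" using xx calculation by auto
        ultimately show ?thesis using o by auto
      qed
    qed
    obtain wc where wc: "c = vx n wc" "wc = u1 \<and> u1 < u2 \<or> wc = v1 \<and> v2 < v1" using outer[of c] by auto
    obtain wd where wd: "d = vx n wd" "wd = u1 \<and> u1 < u2 \<or> wd = v1 \<and> v2 < v1" using outer[of d] by auto
    have "(a = vx n u2 \<and> b = vx n v2) \<or> (a = vx n v2 \<and> b = vx n u2)" using ab by (auto simp: doubleton_eq_iff)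
    then show False
    proof
      assume "a = vx n u2 \<and> b = vx n v2"
      then show False using cy O1[OF wc(2)] O1[OF wd(2)] wc wd by simp
    next
      assume "a = vx n v2 \<and> b = vx n u2"
      then show False using cy O2[OF wc(2)] O2[OF wd(2)] wc wd by simp
    qed
  qed
qed


definition zz :: "int \<Rightarrow> nat \<Rightarrow> int" where
  "zz s t = (if even t then s - int (t div 2) else s + 1 + int (t div 2))"

definition zzl :: "nat \<Rightarrow> int \<Rightarrow> nat list" where
  "zzl n s = map (\<lambda>t. vx n (zz s t)) [0..<n]"

lemma zz_range: assumes "n = 2 * m - 1" "t < n" "m \<ge> 2"
  shows "s - (int m - 1) \<le> zz s t \<and> zz s t \<le> s + int m - 1"
proof (cases "even t")
  case True
  then have "t div 2 \<le> m - 1" using assms by auto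
  then show ?thesis using True assms unfolding zz_def by auto
next
  case False
  then obtain b where b: "t = 2 * b + 1" by (auto elim!: oddE)
  then have "b \<le> m - 2" using assms by arith
  moreover have "t div 2 = b" using b by simp
  ultimately show ?thesis using False assms unfolding zz_def by auto
qed

lemma zz_inj: "zz s t = zz s t' \<Longrightarrow> t = t'"
  unfolding zz_def by (auto split: if_splits elim!: evenE oddE)

lemma zz_edge: "{zz s t, zz s (Suc t)} = {s - int ((t + 1) div 2), s + 1 + int (t div 2)}"
proof (cases "even t")
  case True
  then obtain j where "t = 2 * j" by (auto elim!: evenE)
  then show ?thesis unfolding zz_def by auto
next
  case False
  then obtain j where "t = 2 * j + 1" by (auto elim!: oddE)
  then show ?thesis unfolding zz_def by auto
qed

lemma zz_sum: "(s - int ((t + 1) div 2)) + (s + 1 + int (t div 2)) = 2 * s \<or>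
               (s - int ((t + 1) div 2)) + (s + 1 + int (t div 2)) = 2 * s + 1"
proof (cases "even t")
  case True
  then obtain j where "t = 2 * j" by (auto elim!: evenE)
  then show ?thesis by auto
next
  case False
  then obtain j where "t = 2 * j + 1" by (auto elim!: oddE)
  then show ?thesis by auto
qed

lemma zzl_SHP: assumes n: "n = 2 * m - 1" and m: "m \<ge> 2"
  shows "SHP n (zzl n s)"
proof -
  have n0: "n > 0" using n m by simp
  let ?L = "zzl n s"
  have len: "length ?L = n" unfolding zzl_def by simp
  have nth: "?L ! t = vx n (zz s t)" if "t < n" for t unfolding zzl_def using that by simp
  have inj: "inj_on (\<lambda>t. vx n (zz s t)) {0..<n}"
  proof (rule inj_onI)
    fix t t' assume a: "t \<in> {0..<n}" "t' \<in> {0..<n}" "vx n (zz s t) = vx n (zz s t')"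
    have "zz s t = zz s t'"
      using vx_inj[of "s - (int m - 1)" "zz s t" n "zz s t'"] zz_range[OF n, of t s] zz_range[OF n, of t' s] a m n
      by simp
    then show "t = t'" by (rule zz_inj)
  qed
  have dist: "distinct ?L" unfolding zzl_def using inj by (simp add: distinct_map)
  have sub: "set ?L \<subseteq> {0..<n}" unfolding zzl_def using vx_lt[OF n0] by auto
  have "card (set ?L) = n" using distinct_card[OF dist] len by simp
  then have setL: "set ?L = {0..<n}" using card_subset_eq[OF _ sub] by simp
  have edge: "{?L ! t, ?L ! Suc t} = {vx n (s - int ((t + 1) div 2)), vx n (s + 1 + int (t div 2))}"
    if "Suc t < n" for t
  proof -
    have "{?L ! t, ?L ! Suc t} = (\<lambda>x. vx n x) ` {zz s t, zz s (Suc t)}" using nth that by simp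
    also have "\<dots> = {vx n (s - int ((t + 1) div 2)), vx n (s + 1 + int (t div 2))}" unfolding zz_edge by simp
    finally show ?thesis .
  qed
  have nc: "\<not> crosses n e f" if ein: "e \<in> path_edges ?L" and fin: "f \<in> path_edges ?L" for e f
  proof -
    obtain i where i: "e = {?L ! i, ?L ! Suc i}" "Suc i < n" using ein len unfolding path_edges_def by auto
    obtain j where j: "f = {?L ! j, ?L ! Suc j}" "Suc j < n" using fin len unfolding path_edges_def by auto
    define lo where "lo t = s - int ((t + 1) div 2)" for t
    define hi where "hi t = s + 1 + int (t div 2)" for t
    have E: "e = {vx n (lo i), vx n (hi i)}" "f = {vx n (lo j), vx n (hi j)}" using edge i j unfolding lo_def hi_def by auto
    have mono: "lo b' \<le> lo a' \<and> hi a' \<le> hi b'" if "a' \<le> b'" for a' b'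
      unfolding lo_def hi_def using that by (simp add: div_le_mono)
    have wid: "hi t - lo t = int t + 1" for t unfolding lo_def hi_def by simp
    show ?thesis
    proof (cases "i \<le> j")
      case True
      have o: "lo j \<le> lo i" "lo i < hi i" "hi i \<le> hi j" "hi j < lo j + int n" using mono[OF True] wid[of i] wid[of j] j by auto
      show ?thesis using nested_nc(2)[OF o] E by simp
    next
      case False
      then have "j \<le> i" by simp
      then have o: "lo i \<le> lo j" "lo j < hi j" "hi j \<le> hi i" "hi i < lo i + int n" using mono wid[of i] wid[of j] i by auto
      show ?thesis using nested_nc(1)[OF o] E by simp
    qed
  qed
  show ?thesis unfolding SHP_def using dist setL nc by blast
qed

lemma zzl_edges:
  assumes n: "n = 2 * m - 1" and m: "m \<ge> 2" and e: "e \<in> path_edges (zzl n s)"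
  shows "\<exists>u v. e = {vx n u, vx n v} \<and> vx n u \<noteq> vx n v \<and> (u + v = 2 * s \<or> u + v = 2 * s + 1)"
proof -
  have n0: "n > 0" using n m by simp
  obtain t where t: "e = {zzl n s ! t, zzl n s ! Suc t}" "Suc t < n" using e unfolding path_edges_def zzl_def by auto
  have "e = (\<lambda>x. vx n x) ` {zz s t, zz s (Suc t)}" using t unfolding zzl_def by simp
  then have e2: "e = {vx n (s - int ((t + 1) div 2)), vx n (s + 1 + int (t div 2))}" unfolding zz_edge by simp
  have dL: "distinct (zzl n s)" using zzl_SHP[OF n m, of s] unfolding SHP_def by blast
  have lenL: "length (zzl n s) = n" unfolding zzl_def by simp
  have d: "zzl n s ! t \<noteq> zzl n s ! Suc t" using nth_eq_iff_index_eq[OF dL, of t "Suc t"] lenL t by simp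
  then have "vx n (s - int ((t + 1) div 2)) \<noteq> vx n (s + 1 + int (t div 2))" using t e2 by auto
  then show ?thesis using e2 zz_sum[of s t] by blast
qed

lemma lower:
  assumes n: "n = 2 * m - 1" and m: "m \<ge> 2" and sub: "B' \<subseteq> CK_edges n" and mt: "meets_all_SHP n B'"
  shows "m \<le> card B'"
proof -
  have n0: "n > 0" using n m by simp
  have nn: "int n = 2 * int m - 1" using n m by simp
  define r where "r e = (\<Sum>x\<in>e. int x) mod int n" for e :: "nat set"
  define T where "T = r ` B'"
  have finCK: "finite (CK_edges n)"
  proof -
    have "CK_edges n \<subseteq> Pow {0..<n}" unfolding CK_edges_def by auto
    then show ?thesis by (rule finite_subset) simp
  qed
  have finB: "finite B'" using finite_subset[OF sub finCK] .
  have finT: "finite T" unfolding T_def using finB by simp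
  have rv: "r {vx n u, vx n v} = (u + v) mod int n" if "vx n u \<noteq> vx n v" for u v
    unfolding r_def using that vx_int[OF n0] by (simp add: mod_add_eq)
  have cover: "x mod int n \<in> T \<or> (x + 1) mod int n \<in> T" for x
  proof -
    define s where "s = x * int m"
    have "SHP n (zzl n s)" using zzl_SHP[OF n m] .
    then obtain e where e: "e \<in> B'" "e \<in> path_edges (zzl n s)" using mt unfolding meets_all_SHP_def by blast
    obtain u v where uv: "e = {vx n u, vx n v}" "vx n u \<noteq> vx n v" "u + v = 2 * s \<or> u + v = 2 * s + 1"
      using zzl_edges[OF n m e(2)] by blast
    have re: "r e \<in> T" using e unfolding T_def by simp
    have e1: "2 * s = x + x * int n" unfolding s_def nn by (simp add: algebra_simps)
    have e2: "2 * s + 1 = (x + 1) + x * int n" using e1 by simp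
    have m1a: "(2 * s) mod int n = x mod int n" unfolding e1 by (rule mod_mult_self1)
    have m1b: "(2 * s + 1) mod int n = (x + 1) mod int n" unfolding e2 by (rule mod_mult_self1)
    note m1 = m1a m1b
    have ru: "r e = (u + v) mod int n" using rv[OF uv(2)] uv(1) by simp
    show ?thesis
    proof (cases "u + v = 2 * s")
      case True
      then have "r e = x mod int n" using ru m1a by simp
      then show ?thesis using re by simp
    next
      case False
      then have "u + v = 2 * s + 1" using uv(3) by simp
      then have "r e = (x + 1) mod int n" using ru m1b by simp
      then show ?thesis using re by simp
    qed
  qed
  have inT: "y \<in> T \<or> y + 1 \<in> T" if "0 \<le> y" "y + 1 < int n" for y
    using cover[of y] that by simp
  have "m \<le> card T"
  proof (cases "int n - 1 \<in> T")
    case True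
    define g where "g i = (if i < m - 1 then (if 2 * int i \<in> T then 2 * int i else 2 * int i + 1) else int n - 1)" for i
    have gT: "g i \<in> T" if "i < m" for i
    proof (cases "i < m - 1")
      case True
      then have "2 * int i \<in> T \<or> 2 * int i + 1 \<in> T" using inT[of "2 * int i"] nn by simp
      then show ?thesis using True unfolding g_def by auto
    next
      case False
      then show ?thesis using \<open>int n - 1 \<in> T\<close> unfolding g_def by simp
    qed
    have gd: "g i div 2 = int i" if "i < m" for i
    proof (cases "i < m - 1")
      case True
      have "(2 * int i) div 2 = int i" "(2 * int i + 1) div 2 = int i" by presburger+
      then show ?thesis using True unfolding g_def by simp
    next
      case False
      then have "int i = int m - 1" using that by simp
      moreover have "(int n - 1) div 2 = int m - 1" using nn by presburger
      ultimately show ?thesis using False unfolding g_def by simp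
    qed
    have "inj_on g {0..<m}"
    proof (rule inj_onI)
      fix i j assume a: "i \<in> {0..<m}" "j \<in> {0..<m}" "g i = g j"
      have "g i div 2 = int i" using gd[of i] a(1) by simp
      moreover have "g j div 2 = int j" using gd[of j] a(2) by simp
      ultimately have "int i = int j" using a(3) by metis
      then show "i = j" by simp
    qed
    moreover have "g ` {0..<m} \<subseteq> T" using gT by auto
    ultimately have "card {0..<m} \<le> card T" by (rule card_inj_on_le[OF _ _ finT])
    then show ?thesis by simp
  next
    case False
    have b1: "0 \<le> int n - 2" "int n - 2 + 1 < int n" using nn m by auto
    have b2: "int n - 2 \<in> T \<or> int n - 2 + 1 \<in> T" using inT[OF b1] .
    have b3: "int n - 2 + 1 = int n - 1" by simp
    have a1: "int n - 2 \<in> T" using b2 False unfolding b3 by blast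
    have c1: "(int n - 1) mod int n \<in> T \<or> (int n - 1 + 1) mod int n \<in> T" by (rule cover)
    have c2: "(int n - 1) mod int n = int n - 1" using n0 by (intro mod_pos_pos_trivial) auto
    have c3: "(int n - 1 + 1) mod int n = 0" by simp
    have a0: "0 \<in> T" using c1 False unfolding c2 c3 by blast
    define g where "g i = (if i = 0 then 0 else if i = m - 1 then int n - 2 else
                     (if 2 * int i - 1 \<in> T then 2 * int i - 1 else 2 * int i))" for i
    have gT: "g i \<in> T" if "i < m" for i
    proof -
      consider "i = 0" | "i \<noteq> 0" "i = m - 1" | "i \<noteq> 0" "i \<noteq> m - 1" by blast
      then show ?thesis
      proof cases
        case 1 then show ?thesis using a0 unfolding g_def by simp
      next
        case 2 then show ?thesis using a1 unfolding g_def by simp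
      next
        case 3
        then have "0 \<le> 2 * int i - 1" "2 * int i - 1 + 1 < int n" using that nn by auto
        then have "2 * int i - 1 \<in> T \<or> 2 * int i - 1 + 1 \<in> T" using inT by blast
        then show ?thesis using 3 unfolding g_def by auto
      qed
    qed
    have gd: "(g i + 1) div 2 = int i" if "i < m" for i
    proof -
      consider "i = 0" | "i \<noteq> 0" "i = m - 1" | "i \<noteq> 0" "i \<noteq> m - 1" by blast
      then show ?thesis
      proof cases
        case 1 then show ?thesis unfolding g_def by simp
      next
        case 2
        then have "int i = int m - 1" using m by simp
        moreover have "(int n - 2 + 1) div 2 = int m - 1" using nn by presburger
        ultimately show ?thesis using 2 unfolding g_def by simp
      next
        case 3
        have "(2 * int i - 1 + 1) div 2 = int i" "(2 * int i + 1) div 2 = int i" by presburger+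
        then show ?thesis using 3 unfolding g_def by simp
      qed
    qed
    have "inj_on g {0..<m}"
    proof (rule inj_onI)
      fix i j assume a: "i \<in> {0..<m}" "j \<in> {0..<m}" "g i = g j"
      have "(g i + 1) div 2 = int i" using gd[of i] a(1) by simp
      moreover have "(g j + 1) div 2 = int j" using gd[of j] a(2) by simp
      ultimately have "int i = int j" using a(3) by metis
      then show "i = j" by simp
    qed
    moreover have "g ` {0..<m} \<subseteq> T" using gT by auto
    ultimately have "card {0..<m} \<le> card T" by (rule card_inj_on_le[OF _ _ finT])
    then show ?thesis by simp
  qed
  moreover have "card T \<le> card B'" unfolding T_def using card_image_le[OF finB] .
  ultimately show ?thesis by simp
qed



lemma seg_CK: assumes "0 < y - x" "y - x < int n" shows "seg n k x y \<in> CK_edges n"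
proof -
  have n0: "n > 0" using assms by simp
  have ne: "vx n (x + k) \<noteq> vx n (y + k)"
  proof
    assume "vx n (x + k) = vx n (y + k)"
    then have "x mod int n = y mod int n" using vxk_iff[OF n0] by simp
    then have "(y - x) mod int n = (x - x) mod int n" by (intro mod_diff_cong) auto
    then have "(y - x) mod int n = 0" by simp
    moreover have "(y - x) mod int n = y - x" using assms by simp
    ultimately show False using assms by simp
  qed
  show ?thesis unfolding seg_def CK_edges_def using ne vx_lt[OF n0] by blast
qed

lemma card_B:
  assumes par: "classB_params m \<alpha> \<beta> \<gamma> \<delta> \<eta> \<epsilon> \<xi>"
  shows "card (classB_set m k \<alpha> \<beta> \<gamma> \<delta> \<eta> \<epsilon> \<xi>) \<le> m"
proof -
  have pp: "0 \<le> \<alpha>" "0 \<le> \<delta>" "2 \<le> \<beta>" "2 \<le> \<gamma>" "\<beta> + \<gamma> = int m - \<alpha> - \<delta> - 1"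
    using par unfolding classB_params_def by auto
  define n where "n = 2 * m - 1"
  define A1 where "A1 = {seg n k i (i + 1) | i. \<alpha> \<le> i \<and> i < \<alpha> + \<beta>}"
  define A2 where "A2 = {seg n k i (i + 1) | i. \<alpha> + \<beta> + 1 \<le> i \<and> i < int m - \<delta>}"
  define A3 where "A3 = {seg n k (\<alpha> + \<beta> - \<eta>) (\<alpha> + \<beta> + 1 + \<eta>)}"
  define A4 where "A4 = {seg n k (i - 1 - \<epsilon> i) (i + \<epsilon> i) | i. 1 \<le> i \<and> i \<le> \<alpha>}"
  define A5 where "A5 = {seg n k (int m - j - \<xi> j) (int m - j + 1 + \<xi> j) | j. 1 \<le> j \<and> j \<le> \<delta>}"
  have eq: "classB_set m k \<alpha> \<beta> \<gamma> \<delta> \<eta> \<epsilon> \<xi> = A1 \<union> A2 \<union> A3 \<union> A4 \<union> A5"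
    unfolding classB_set_def Let_def A1_def A2_def A3_def A4_def A5_def n_def by simp
  have c1: "card A1 \<le> nat \<beta>"
  proof -
    have "A1 = (\<lambda>i. seg n k i (i + 1)) ` {\<alpha>..<\<alpha> + \<beta>}" unfolding A1_def by auto
    then have eqA: "card A1 \<le> card {\<alpha>..<\<alpha> + \<beta>}" by (metis card_image_le finite_atLeastLessThan_int finite_atLeastAtMost_int)
    then show ?thesis by simp
  qed
  have c2: "card A2 \<le> nat \<gamma>"
  proof -
    have "A2 = (\<lambda>i. seg n k i (i + 1)) ` {\<alpha> + \<beta> + 1..<int m - \<delta>}" unfolding A2_def by auto
    then have eqA: "card A2 \<le> card {\<alpha> + \<beta> + 1..<int m - \<delta>}" by (metis card_image_le finite_atLeastLessThan_int finite_atLeastAtMost_int)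
    then show ?thesis using pp by simp
  qed
  have c3: "card A3 \<le> 1" unfolding A3_def by simp
  have c4: "card A4 \<le> nat \<alpha>"
  proof -
    have "A4 = (\<lambda>i. seg n k (i - 1 - \<epsilon> i) (i + \<epsilon> i)) ` {1..\<alpha>}" unfolding A4_def by auto
    then have eqA: "card A4 \<le> card {1..\<alpha>}" by (metis card_image_le finite_atLeastLessThan_int finite_atLeastAtMost_int)
    then show ?thesis by simp
  qed
  have c5: "card A5 \<le> nat \<delta>"
  proof -
    have "A5 = (\<lambda>j. seg n k (int m - j - \<xi> j) (int m - j + 1 + \<xi> j)) ` {1..\<delta>}" unfolding A5_def by auto
    then have eqA: "card A5 \<le> card {1..\<delta>}" by (metis card_image_le finite_atLeastLessThan_int finite_atLeastAtMost_int)
    then show ?thesis by simp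
  qed
  have "card (A1 \<union> A2 \<union> A3 \<union> A4 \<union> A5) \<le> card A1 + card A2 + card A3 + card A4 + card A5"
    by (meson add_mono card_Un_le le_trans order_refl)
  moreover have "nat \<beta> + nat \<gamma> + 1 + nat \<alpha> + nat \<delta> = m" using pp by linarith
  ultimately show ?thesis unfolding eq using c1 c2 c3 c4 c5 by linarith
qed

lemma B_sub_CK:
  assumes par: "classB_params m \<alpha> \<beta> \<gamma> \<delta> \<eta> \<epsilon> \<xi>"
  shows "classB_set m k \<alpha> \<beta> \<gamma> \<delta> \<eta> \<epsilon> \<xi> \<subseteq> CK_edges (2 * m - 1)"
proof -
  have pp: "0 \<le> \<alpha>" "0 \<le> \<delta>" "2 \<le> \<beta>" "2 \<le> \<gamma>" "\<beta> + \<gamma> = int m - \<alpha> - \<delta> - 1" "\<alpha> + \<delta> \<le> int m - 5"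
    "1 \<le> \<eta>" "\<eta> \<le> \<beta> - 1"
    and eb: "\<forall>i. 1 \<le> i \<and> i \<le> \<alpha> \<longrightarrow> 0 < \<epsilon> i \<and> \<epsilon> i < \<alpha> + \<beta> - 1"
    and xb: "\<forall>j. 1 \<le> j \<and> j \<le> \<delta> \<longrightarrow> 0 < \<xi> j \<and> \<xi> j < \<gamma> + \<delta> - 1"
    using par unfolding classB_params_def by auto
  define n where "n = 2 * m - 1"
  have nn: "int n = 2 * int m - 1" unfolding n_def using pp by simp
  have n1: "1 < int n" using nn pp by linarith
  have bm: "\<beta> \<le> int m - 3" "\<gamma> \<le> int m - 3" "\<alpha> + \<beta> \<le> int m - 3" "\<gamma> + \<delta> \<le> int m - 3" using pp by linarith+
  show ?thesis unfolding n_def[symmetric]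
  proof
    fix e assume "e \<in> classB_set m k \<alpha> \<beta> \<gamma> \<delta> \<eta> \<epsilon> \<xi>"
    then consider (a) i where "e = seg n k i (i + 1)"
      | (b) "e = seg n k (\<alpha> + \<beta> - \<eta>) (\<alpha> + \<beta> + 1 + \<eta>)"
      | (c) i where "e = seg n k (i - 1 - \<epsilon> i) (i + \<epsilon> i)" "1 \<le> i" "i \<le> \<alpha>"
      | (d) j where "e = seg n k (int m - j - \<xi> j) (int m - j + 1 + \<xi> j)" "1 \<le> j" "j \<le> \<delta>"
      unfolding classB_set_def Let_def n_def by blast
    then show "e \<in> CK_edges n"
    proof cases
      case (a i)
      have "0 < i + 1 - i" "i + 1 - i < int n" using n1 by simp_all
      then show ?thesis using seg_CK a by simp
    next
      case b
      have "0 < \<alpha> + \<beta> + 1 + \<eta> - (\<alpha> + \<beta> - \<eta>)" "\<alpha> + \<beta> + 1 + \<eta> - (\<alpha> + \<beta> - \<eta>) < int n"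
        using nn pp bm by linarith+
      then show ?thesis using seg_CK b by simp
    next
      case (c i)
      have "0 < \<epsilon> i" "\<epsilon> i < \<alpha> + \<beta> - 1" using eb c by auto
      then have "0 < i + \<epsilon> i - (i - 1 - \<epsilon> i)" "i + \<epsilon> i - (i - 1 - \<epsilon> i) < int n"
        using nn pp bm by linarith+
      then show ?thesis using seg_CK c by simp
    next
      case (d j)
      have "0 < \<xi> j" "\<xi> j < \<gamma> + \<delta> - 1" using xb d by auto
      then have "0 < int m - j + 1 + \<xi> j - (int m - j - \<xi> j)" "int m - j + 1 + \<xi> j - (int m - j - \<xi> j) < int n"
        using nn pp bm by linarith+
      then show ?thesis using seg_CK d by simp
    qed
  qed
qed

theorem theorem2:
  fixes m :: nat and B :: "nat set set"
  assumes "m \<ge> 2" and "classB m B"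
  shows "SHP_blocker (2 * m - 1) B"
proof -
  obtain k \<alpha> \<beta> \<gamma> \<delta> \<eta> \<epsilon> \<xi> where par: "classB_params m \<alpha> \<beta> \<gamma> \<delta> \<eta> \<epsilon> \<xi>"
    and B: "B = classB_set m k \<alpha> \<beta> \<gamma> \<delta> \<eta> \<epsilon> \<xi>"
    using assms(2) unfolding classB_def by blast
  have sub: "B \<subseteq> CK_edges (2 * m - 1)" using B_sub_CK[OF par] B by simp
  have meets: "meets_all_SHP (2 * m - 1) B"
    unfolding meets_all_SHP_def using blocks[OF par refl B] by blast
  have minimal: "card B \<le> card B'" if "B' \<subseteq> CK_edges (2 * m - 1) \<and> meets_all_SHP (2 * m - 1) B'" for B'
  proof -
    have "card B \<le> m" using card_B[OF par] B by simp
    moreover have "m \<le> card B'" using lower[OF refl assms(1)] that by blast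
    ultimately show ?thesis by simp
  qed
  show ?thesis unfolding SHP_blocker_def using sub meets minimal by blast
qed


end
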